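(* Let $\lambda\vdash n$ be a partition and let $\mathbf{x}=(x_i)_{i\in\mathbb{Z}}$ be commuting indeterminates. Then, as an identity of rational functions in $\mathbf{x}$, \[\sum_{T}T_{\mathbf{x}}=\prod_{(i,j)\in\lambda}\frac{1}{h_\lambda(i,j;\mathbf{x})},\] where the sum is over all standard Young tableaux $T$ of shape $\lambda$.
   Context: Partitions are drawn in English notation with matrix coordinates: the box in row $i$ and column $j$ is $(i,j)$. The hook $H_\lambda(i,j)$ is the set of boxes $(i,j')\in\lambda$ with $j'\ge j$ together with the boxes $(i',j)\in\lambda$ with $i'\ge i$, and the $\mathbf{x}$-hook-length is $h_\lambda(i,j;\mathbf{x})=\sum_{(i',j')\in H_\lambda(i,j)}x_{j'-i'}$. For a standard Young tableau $T$ of shape $\lambda\vdash n$ and $k\in[n]$, let $(i_T(k),j_T(k))$ be the box containing $k$, and define \[T_{\mathbf{x}}=\prod_{k=1}^{n}\frac{1}{\sum_{l=1}^{k}x_{j_T(n+1-l)-i_T(n+1-l)}}.\] *)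

theory Defs
  imports Main
begin

definition is_partition :: "nat list \<Rightarrow> nat \<Rightarrow> bool" where
  "is_partition lam n \<longleftrightarrow> sorted_wrt (\<ge>) lam \<and> (\<forall>p\<in>set lam. 0 < p) \<and> sum_list lam = n"

text \<open>Young diagram in English notation, matrix coordinates, 1-indexed: box (i,j).\<close>
definition boxes :: "nat list \<Rightarrow> (nat \<times> nat) set" where
  "boxes lam = {(i, j). 1 \<le> i \<and> i \<le> length lam \<and> 1 \<le> j \<and> j \<le> lam ! (i - 1)}"

definition content :: "nat \<times> nat \<Rightarrow> int" where
  "content b = int (snd b) - int (fst b)"

definition SYT :: "nat list \<Rightarrow> (nat \<times> nat \<Rightarrow> nat) set" where
  "SYT lam = {T. bij_betw T (boxes lam) {1..sum_list lam}
      \<and> (\<forall>i j. (i, j) \<in> boxes lam \<and> (i, j + 1) \<in> boxes lam \<longrightarrow> T (i, j) < T (i, j + 1))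
      \<and> (\<forall>i j. (i, j) \<in> boxes lam \<and> (i + 1, j) \<in> boxes lam \<longrightarrow> T (i, j) < T (i + 1, j))
      \<and> (\<forall>b. b \<notin> boxes lam \<longrightarrow> T b = 0)}"

definition pos :: "nat list \<Rightarrow> (nat \<times> nat \<Rightarrow> nat) \<Rightarrow> nat \<Rightarrow> nat \<times> nat" where
  "pos lam T k = inv_into (boxes lam) T k"

definition T_x :: "nat list \<Rightarrow> (int \<Rightarrow> 'a::field) \<Rightarrow> (nat \<times> nat \<Rightarrow> nat) \<Rightarrow> 'a" where
  "T_x lam x T = (let n = sum_list lam in
     \<Prod>k=1..n. 1 / (\<Sum>l=1..k. x (content (pos lam T (n + 1 - l)))))"

definition hook :: "nat list \<Rightarrow> nat \<Rightarrow> nat \<Rightarrow> (nat \<times> nat) set" where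
  "hook lam i j = {(i', j') \<in> boxes lam. (i' = i \<and> j' \<ge> j) \<or> (j' = j \<and> i' \<ge> i)}"

definition hook_x :: "nat list \<Rightarrow> nat \<Rightarrow> nat \<Rightarrow> (int \<Rightarrow> 'a::field) \<Rightarrow> 'a" where
  "hook_x lam i j x = (\<Sum>b\<in>hook lam i j. x (content b))"

end

theory Submission
  imports Defs "Jordan_Normal_Form.Determinant" "HOL-Computational_Algebra.Polynomial_Factorial"
begin

hide_const (open) Polynomial.content


lemma detm: "det (mat n n f) = (\<Sum>p | p permutes {0..<n}. of_int (sign p) * (\<Prod>i = 0..<n. f (i, p i)))"
proof -
  have "det (mat n n f) = (\<Sum>p | p permutes {0..<n}. of_int (sign p) * (\<Prod>i = 0..<n. mat n n f $$ (i, p i)))"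
    by (rule det_def') simp
  also have "\<dots> = (\<Sum>p | p permutes {0..<n}. of_int (sign p) * (\<Prod>i = 0..<n. f (i, p i)))"
  proof (rule sum.cong[OF refl])
    fix p assume "p \<in> {p. p permutes {0..<n}}"
    hence p: "p permutes {0..<n}" by simp
    have "\<And>i. i \<in> {0..<n} \<Longrightarrow> mat n n f $$ (i, p i) = f (i, p i)"
      using p permutes_in_image by fastforce
    thus "of_int (sign p) * (\<Prod>i = 0..<n. mat n n f $$ (i, p i)) = of_int (sign p) * (\<Prod>i = 0..<n. f (i, p i))"
      by simp
  qed
  finally show ?thesis .
qed

lemma prod_pick:
  fixes g :: "nat \<Rightarrow> 'a::comm_ring_1"
  assumes "i0 \<in> A" "finite A"
  shows "(\<Prod>i\<in>A. if i = i0 then u else g i) = u * (\<Prod>i\<in>A - {i0}. g i)"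
proof -
  have "(\<Prod>i\<in>A. if i = i0 then u else g i) = (if i0 = i0 then u else g i0) * (\<Prod>i\<in>A - {i0}. if i = i0 then u else g i)"
    using assms by (simp add: prod.remove)
  also have "(\<Prod>i\<in>A - {i0}. if i = i0 then u else g i) = (\<Prod>i\<in>A - {i0}. g i)"
    by (rule prod.cong) auto
  finally show ?thesis by simp
qed

lemma perm_pre:
  assumes p: "p permutes {0..<(n::nat)}" and j: "j < n"
  shows "Hilbert_Choice.inv p j < n" "p (Hilbert_Choice.inv p j) = j"
    "\<And>i. p i = j \<longleftrightarrow> i = Hilbert_Choice.inv p j"
proof -
  show "Hilbert_Choice.inv p j < n" using permutes_in_image[OF permutes_inv[OF p], of j] j by auto
  show "p (Hilbert_Choice.inv p j) = j" using permutes_inverses(1)[OF p] by simp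
  fix i show "p i = j \<longleftrightarrow> i = Hilbert_Choice.inv p j"
    using permutes_inverses[OF p] by metis
qed

lemma det_col_lin:
  fixes u v :: "nat \<Rightarrow> 'a::comm_ring_1"
  assumes j: "j < n"
  shows "det (mat n n (\<lambda>(i,k). if k = j then u i + c * v i else f i k)) =
         det (mat n n (\<lambda>(i,k). if k = j then u i else f i k)) + c * det (mat n n (\<lambda>(i,k). if k = j then v i else f i k))"
proof -
  have "\<And>p. p permutes {0..<n} \<Longrightarrow>
     (\<Prod>i = 0..<n. (\<lambda>(i,k). if k = j then u i + c * v i else f i k) (i, p i)) =
     (\<Prod>i = 0..<n. (\<lambda>(i,k). if k = j then u i else f i k) (i, p i)) + c * (\<Prod>i = 0..<n. (\<lambda>(i,k). if k = j then v i else f i k) (i, p i))"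
  proof -
    fix p assume p: "p permutes {0..<n}"
    let ?i0 = "Hilbert_Choice.inv p j"
    have i0: "?i0 \<in> {0..<n}" using perm_pre[OF p j] by simp
    have e: "\<And>w. (\<Prod>i = 0..<n. (if p i = j then w i else f i (p i))) = w ?i0 * (\<Prod>i\<in>{0..<n} - {?i0}. f i (p i))"
    proof -
      fix w :: "nat \<Rightarrow> 'a"
      have "(\<Prod>i = 0..<n. (if p i = j then w i else f i (p i))) = (\<Prod>i = 0..<n. (if i = ?i0 then w ?i0 else f i (p i)))"
        by (rule prod.cong) (auto simp: perm_pre[OF p j])
      also have "\<dots> = w ?i0 * (\<Prod>i\<in>{0..<n} - {?i0}. f i (p i))" by (rule prod_pick[OF i0]) simp
      finally show "?thesis w" .
    qed
    show "?thesis p" using e[of "\<lambda>i. u i + c * v i"] e[of u] e[of v] by (simp add: algebra_simps)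
  qed
  thus ?thesis unfolding detm by (simp add: sum_distrib_left sum.distrib[symmetric] algebra_simps)
qed

lemma det_scale_cols:
  fixes y :: "nat \<Rightarrow> 'a::comm_ring_1"
  shows "(\<Sum>j<n. det (mat n n (\<lambda>(i,k). if k = j then y i * f i k else f i k))) =
     (\<Sum>i<n. y i) * det (mat n n (\<lambda>(i,k). f i k))"
proof -
  have key: "\<And>p. p permutes {0..<n} \<Longrightarrow>
     (\<Sum>j<n. \<Prod>i = 0..<n. (\<lambda>(i,k). if k = j then y i * f i k else f i k) (i, p i)) =
     (\<Sum>i<n. y i) * (\<Prod>i = 0..<n. f i (p i))"
  proof -
    fix p assume p: "p permutes {0..<n}"
    have "\<And>j. j < n \<Longrightarrow> (\<Prod>i = 0..<n. (\<lambda>(i,k). if k = j then y i * f i k else f i k) (i, p i)) =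
         y (Hilbert_Choice.inv p j) * (\<Prod>i = 0..<n. f i (p i))"
    proof -
      fix j assume j: "j < n"
      let ?i0 = "Hilbert_Choice.inv p j"
      have i0: "?i0 \<in> {0..<n}" using perm_pre[OF p j] by simp
      have "(\<Prod>i = 0..<n. (\<lambda>(i,k). if k = j then y i * f i k else f i k) (i, p i)) =
            (\<Prod>i = 0..<n. (if i = ?i0 then y ?i0 * f ?i0 (p ?i0) else f i (p i)))"
        by (rule prod.cong) (auto simp: perm_pre[OF p j])
      also have "\<dots> = y ?i0 * f ?i0 (p ?i0) * (\<Prod>i\<in>{0..<n} - {?i0}. f i (p i))" by (rule prod_pick[OF i0]) simp
      also have "(\<Prod>i = 0..<n. f i (p i)) = f ?i0 (p ?i0) * (\<Prod>i\<in>{0..<n} - {?i0}. f i (p i))"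
        using i0 by (simp add: prod.remove)
      ultimately show "?thesis j" by (simp add: algebra_simps)
    qed
    hence "(\<Sum>j<n. \<Prod>i = 0..<n. (\<lambda>(i,k). if k = j then y i * f i k else f i k) (i, p i)) =
        (\<Sum>j<n. y (Hilbert_Choice.inv p j)) * (\<Prod>i = 0..<n. f i (p i))"
      by (simp add: sum_distrib_right)
    also have "(\<Sum>j<n. y (Hilbert_Choice.inv p j)) = (\<Sum>i<n. y i)"
    proof -
      have pi: "Hilbert_Choice.inv p permutes {..<n}" using permutes_inv[OF p] by (simp add: atLeast0LessThan)
      show ?thesis using sum.permute[OF pi, of y] by (simp add: comp_def)
    qed
    finally show "?thesis p" .
  qed
  have "(\<Sum>j<n. det (mat n n (\<lambda>(i,k). if k = j then y i * f i k else f i k))) =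
     (\<Sum>p | p permutes {0..<n}. of_int (sign p) * (\<Sum>j<n. \<Prod>i = 0..<n. (\<lambda>(i,k). if k = j then y i * f i k else f i k) (i, p i)))"
    unfolding detm by (simp add: sum_distrib_left sum.swap[of _ "{..<n}"])
  also have "\<dots> = (\<Sum>p | p permutes {0..<n}. (\<Sum>i<n. y i) * (of_int (sign p) * (\<Prod>i = 0..<n. f i (p i))))"
  proof (rule sum.cong[OF refl])
    fix p assume "p \<in> {p. p permutes {0..<n}}"
    hence "p permutes {0..<n}" by simp
    from key[OF this] show "of_int (sign p) * (\<Sum>j<n. \<Prod>i = 0..<n. (\<lambda>(i,k). if k = j then y i * f i k else f i k) (i, p i)) = (\<Sum>i<n. y i) * (of_int (sign p) * (\<Prod>i = 0..<n. f i (p i)))"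
      by simp
  qed
  also have "\<dots> = (\<Sum>i<n. y i) * det (mat n n (\<lambda>(i,k). f i k))"
    unfolding detm by (simp add: sum_distrib_left)
  finally show ?thesis .
qed

lemma det_rows_scale:
  fixes c :: "nat \<Rightarrow> 'a::comm_ring_1"
  shows "det (mat n n (\<lambda>(i,k). c i * f i k)) = (\<Prod>i<n. c i) * det (mat n n (\<lambda>(i,k). f i k))"
  unfolding detm by (simp add: sum_distrib_left prod.distrib atLeast0LessThan algebra_simps)

lemma det_zero_block:
  assumes j: "j < n" and z: "\<And>i k. j \<le> i \<Longrightarrow> i < n \<Longrightarrow> k \<le> j \<Longrightarrow> f i k = 0"
  shows "det (mat n n (\<lambda>(i,k). f i k)) = (0::'a::comm_ring_1)"
proof -
  have "\<And>p. p permutes {0..<n} \<Longrightarrow> (\<Prod>i = 0..<n. (\<lambda>(i,k). f i k) (i, p i)) = 0"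
  proof -
    fix p assume p: "p permutes {0..<n}"
    have "\<exists>i\<in>{j..<n}. p i \<le> j"
    proof (rule ccontr)
      assume neg: "\<not> (\<exists>i\<in>{j..<n}. p i \<le> j)"
      have "p ` {j..<n} \<subseteq> {Suc j..<n}"
      proof
        fix y assume "y \<in> p ` {j..<n}"
        then obtain x where x: "x \<in> {j..<n}" "y = p x" by blast
        have "p x \<in> {0..<n}" using permutes_in_image[OF p, of x] x by simp
        moreover have "\<not> p x \<le> j" using neg x by blast
        ultimately show "y \<in> {Suc j..<n}" using x by simp
      qed
      moreover have "inj_on p {j..<n}" using permutes_inj[OF p] by (auto intro: inj_on_subset)
      ultimately have "card {j..<n} \<le> card {Suc j..<n}"
        using card_inj_on_le by blast
      thus False using j by simp
    qed
    then obtain i where "i \<in> {j..<n}" "p i \<le> j" by blast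
    thus "?thesis p" using z by (intro prod_zero) (auto intro!: bexI[of _ i])
  qed
  thus ?thesis unfolding detm by simp
qed

lemma det_triangular:
  assumes z: "\<And>i k. k < i \<Longrightarrow> i < n \<Longrightarrow> f i k = 0"
  shows "det (mat n n (\<lambda>(i,k). f i k)) = (\<Prod>i<n. f i i :: 'a::comm_ring_1)"
proof -
  have "det (mat n n (\<lambda>(i,k). f i k)) = prod_list (diag_mat (mat n n (\<lambda>(i,k). f i k)))"
    by (rule det_upper_triangular) (auto simp: upper_triangular_def z)
  also have "\<dots> = (\<Prod>i<n. f i i)"
    by (simp add: diag_mat_def prod.distinct_set_conv_list[symmetric] atLeast0LessThan[symmetric] cong: map_cong)
  finally show ?thesis .
qed


definition FP :: "(nat \<Rightarrow> 'a::comm_ring_1) \<Rightarrow> 'a \<Rightarrow> nat \<Rightarrow> 'a" where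
  "FP a y k = (\<Prod>m<k. y - a m)"

lemma FP_Suc: "FP a y (Suc m) = FP a y m * (y - a m)"
  by (simp add: FP_def)

lemma FP_0[simp]: "FP a y 0 = 1" by (simp add: FP_def)

lemma mat_eq_lam: "(\<And>i k. f (i,k) = g (i,k)) \<Longrightarrow> mat n m f = mat n m g"
proof -
  assume "\<And>i k. f (i,k) = g (i,k)"
  hence "f = g" by (auto simp: fun_eq_iff)
  thus ?thesis by simp
qed

lemma det_identical_cols':
  assumes "r < n" "s < n" "r \<noteq> s" "\<And>i. i < n \<Longrightarrow> f i r = f i s"
  shows "det (mat n n (\<lambda>(i,k). f i k)) = (0::'a::comm_ring_1)"
proof (rule det_identical_columns[of _ n r s])
  show "col (mat n n (\<lambda>(i, k). f i k)) r = col (mat n n (\<lambda>(i, k). f i k)) s"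
    using assms by (intro eq_vecI) auto
qed (use assms in auto)

lemma vdm:
  fixes z :: "nat \<Rightarrow> 'a::comm_ring_1"
  shows "det (mat N N (\<lambda>(i,j). FP a (z i) (N - 1 - j))) = (\<Prod>i<N. \<Prod>k\<in>{i<..<N}. (z i - z k))"
proof (induction N)
  case 0
  show ?case by (simp add: det_dim_zero)
next
  case (Suc N)
  define B where "B r = (\<lambda>(i,j). if j < r then (z i - z N) * FP a (z i) (N - 1 - j) else FP a (z i) (N - j))" for r
  have step: "det (mat (Suc N) (Suc N) (B r)) = det (mat (Suc N) (Suc N) (B 0))" if "r \<le> N" for r
    using that
  proof (induction r)
    case 0 show ?case by simp
  next
    case (Suc r)
    hence r: "r < N" by simp
    let ?c = "- (z N - a (N - 1 - r))"
    let ?u = "\<lambda>i. FP a (z i) (N - r)"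
    let ?v = "\<lambda>i. FP a (z i) (N - 1 - r)"
    let ?f = "\<lambda>i k. B r (i,k)"
    have "mat (Suc N) (Suc N) (B (Suc r)) = mat (Suc N) (Suc N) (\<lambda>(i,k). if k = r then ?u i + ?c * ?v i else ?f i k)"
    proof (rule mat_eq_lam)
      fix i k
      have "N - r = Suc (N - 1 - r)" using r by simp
      hence "?u i = ?v i * (z i - a (N - 1 - r))" by (simp add: FP_Suc)
      thus "B (Suc r) (i,k) = (\<lambda>(i,k). if k = r then ?u i + ?c * ?v i else ?f i k) (i,k)"
        by (auto simp: B_def algebra_simps)
    qed
    hence "det (mat (Suc N) (Suc N) (B (Suc r))) = det (mat (Suc N) (Suc N) (\<lambda>(i,k). if k = r then ?u i else ?f i k)) + ?c * det (mat (Suc N) (Suc N) (\<lambda>(i,k). if k = r then ?v i else ?f i k))"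
      using det_col_lin[of r "Suc N" ?u ?c ?v ?f] r by simp
    also have "mat (Suc N) (Suc N) (\<lambda>(i,k). if k = r then ?u i else ?f i k) = mat (Suc N) (Suc N) (B r)"
      by (rule mat_eq_lam) (auto simp: B_def)
    also have "det (mat (Suc N) (Suc N) (\<lambda>(i,k). if k = r then ?v i else ?f i k)) = 0"
      by (rule det_identical_cols'[of r _ "Suc r"]) (use r in \<open>auto simp: B_def\<close>)
    finally show ?case using Suc by simp
  qed
  have B0: "mat (Suc N) (Suc N) (B 0) = mat (Suc N) (Suc N) (\<lambda>(i,j). FP a (z i) (Suc N - 1 - j))"
    by (rule mat_eq_lam) (auto simp: B_def)
  have "det (mat (Suc N) (Suc N) (B N)) = (\<Sum>j<Suc N. mat (Suc N) (Suc N) (B N) $$ (N,j) * cofactor (mat (Suc N) (Suc N) (B N)) N j)"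
    by (rule laplace_expansion_row) auto
  also have "\<dots> = cofactor (mat (Suc N) (Suc N) (B N)) N N"
    by (simp add: B_def)
  also have "\<dots> = det (mat_delete (mat (Suc N) (Suc N) (B N)) N N)"
    by (simp add: cofactor_def)
  also have "mat_delete (mat (Suc N) (Suc N) (B N)) N N = mat N N (\<lambda>(i,j). (z i - z N) * FP a (z i) (N - 1 - j))"
    by (rule eq_matI) (auto simp: mat_delete_def B_def)
  also have "det \<dots> = (\<Prod>i<N. z i - z N) * det (mat N N (\<lambda>(i,j). FP a (z i) (N - 1 - j)))"
    using det_rows_scale[where c="\<lambda>i. z i - z N" and f="\<lambda>i j. FP a (z i) (N - 1 - j)" and n=N] by simp
  also have "\<dots> = (\<Prod>i<N. z i - z N) * (\<Prod>i<N. \<Prod>k\<in>{i<..<N}. (z i - z k))" using Suc.IH by simp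
  also have "\<dots> = (\<Prod>i<Suc N. \<Prod>k\<in>{i<..<Suc N}. (z i - z k))"
  proof -
    have "\<And>i. i < N \<Longrightarrow> {i<..<Suc N} = insert N {i<..<N}" by auto
    hence "\<And>i. i < N \<Longrightarrow> (\<Prod>k\<in>{i<..<Suc N}. (z i - z k)) = (z i - z N) * (\<Prod>k\<in>{i<..<N}. (z i - z k))"
      by simp
    hence "(\<Prod>i<N. \<Prod>k\<in>{i<..<Suc N}. (z i - z k)) = (\<Prod>i<N. z i - z N) * (\<Prod>i<N. \<Prod>k\<in>{i<..<N}. (z i - z k))"
      by (simp add: prod.distrib)
    moreover have "{N<..<Suc N} = {}" by auto
    ultimately show ?thesis by simp
  qed
  finally show ?case using step[of N] B0 by simp
qed


lemma FP_vanish: "m < k \<Longrightarrow> FP a (a m) k = 0"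
  unfolding FP_def by (rule prod_zero) auto

lemma mono_cons:
  assumes "\<And>i. Suc i < n \<Longrightarrow> f (Suc i) \<le> (f i :: nat)" "k \<le> j" "j < n"
  shows "f j \<le> f k"
  using assms(2,3)
proof (induction j)
  case 0 thus ?case by simp
next
  case (Suc j)
  show ?case
  proof (cases "k = Suc j")
    case False
    hence "f j \<le> f k" using Suc by simp
    moreover have "f (Suc j) \<le> f j" using assms(1) Suc.prems by simp
    ultimately show ?thesis by simp
  qed simp
qed

definition gdet :: "(nat \<Rightarrow> 'a::comm_ring_1) \<Rightarrow> nat \<Rightarrow> (nat \<Rightarrow> nat) \<Rightarrow> (nat \<Rightarrow> nat) \<Rightarrow> 'a" where
  "gdet a n L mu = det (mat n n (\<lambda>(i,j). FP a (a (L i + n - 1 - i)) (mu j + n - 1 - j)))"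

definition addable :: "nat \<Rightarrow> (nat \<Rightarrow> nat) \<Rightarrow> (nat \<Rightarrow> nat) \<Rightarrow> nat set" where
  "addable n L mu = {r. r < n \<and> mu r < L r \<and> (r = 0 \<or> mu r < mu (r - 1))}"

lemma gdet_zero_nonadd:
  assumes Ld: "\<And>i. Suc i < n \<Longrightarrow> L (Suc i) \<le> L i"
    and md: "\<And>i. Suc i < n \<Longrightarrow> mu (Suc i) \<le> mu i"
    and ml: "\<And>i. i < n \<Longrightarrow> mu i \<le> L i"
    and j: "j < n" "j \<notin> addable n L mu"
  shows "gdet a n L (mu(j := Suc (mu j))) = 0"
proof -
  define m where "m = mu(j := Suc (mu j))"
  show ?thesis
  proof (cases "j > 0 \<and> mu j = mu (j - 1)")
    case True
    then obtain j' where j': "j = Suc j'" "mu (Suc j') = mu j'" by (cases j) auto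
    have e: "m j' + n - 1 - j' = m j + n - 1 - j"
      using j' j unfolding m_def by simp
    show ?thesis unfolding gdet_def m_def[symmetric]
      by (rule det_identical_cols'[of j' n j]) (use j' j e in simp_all)
  next
    case False
    have "j = 0 \<or> mu j < mu (j - 1)"
    proof (cases j)
      case (Suc j') thus ?thesis using False md[of j'] j by auto
    qed simp
    hence mj: "mu j = L j" using j ml[of j] unfolding addable_def by auto
    show ?thesis unfolding gdet_def m_def[symmetric]
    proof (rule det_zero_block[OF j(1)])
      fix i k assume ik: "j \<le> i" "i < n" "k \<le> j"
      have "L i \<le> L j" using mono_cons[of n L j i, OF Ld] ik by simp
      moreover have "mu j \<le> m k"
      proof (cases "k = j")
        case True thus ?thesis unfolding m_def by simp
      next
        case False thus ?thesis unfolding m_def using mono_cons[of n mu k j, OF md] ik j by simp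
      qed
      moreover have "k < j \<Longrightarrow> mu j \<le> m k" using calculation(2) .
      ultimately have "L i + n - 1 - i < m k + n - 1 - k"
      proof -
        assume a1: "L i \<le> L j" and a2: "mu j \<le> m k"
        have "m k \<ge> L j" using a2 mj by simp
        show ?thesis
        proof (cases "k = j")
          case True
          hence "m k = Suc (L j)" unfolding m_def using mj by simp
          thus ?thesis using a1 ik True by linarith
        next
          case False
          thus ?thesis using a1 \<open>m k \<ge> L j\<close> ik by linarith
        qed
      qed
      thus "FP a (a (L i + n - 1 - i)) (m k + n - 1 - k) = 0" by (rule FP_vanish)
    qed
  qed
qed

lemma pieri_col:
  fixes a :: "nat \<Rightarrow> 'a::comm_ring_1"
  assumes j: "j < n"
  shows "det (mat n n (\<lambda>(i,k). if k = j then a (L i + n - 1 - i) * FP a (a (L i + n - 1 - i)) (mu k + n - 1 - k) else FP a (a (L i + n - 1 - i)) (mu k + n - 1 - k))) =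
      gdet a n L (mu(j := Suc (mu j))) + a (mu j + n - 1 - j) * gdet a n L mu"
proof -
  define Y where "Y i = a (L i + n - 1 - i)" for i
  define f where "f i k = FP a (Y i) (mu k + n - 1 - k)" for i k
  define u where "u i = FP a (Y i) (Suc (mu j) + n - 1 - j)" for i
  define c where "c = a (mu j + n - 1 - j)"
  define v where "v i = f i j" for i
  have eq: "Suc (mu j) + n - 1 - j = Suc (mu j + n - 1 - j)" using j by simp
  have e: "Y i * f i j = u i + c * v i" for i
  proof -
    have "u i = f i j * (Y i - c)" unfolding u_def f_def c_def eq FP_Suc ..
    thus ?thesis unfolding v_def by (simp add: algebra_simps)
  qed
  have m1: "mat n n (\<lambda>(i,k). if k = j then Y i * f i k else f i k) =
        mat n n (\<lambda>(i,k). if k = j then u i + c * v i else f i k)"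
    by (rule mat_eq_lam) (simp add: e)
  have d: "det (mat n n (\<lambda>(i,k). if k = j then u i + c * v i else f i k)) =
    det (mat n n (\<lambda>(i,k). if k = j then u i else f i k)) + c * det (mat n n (\<lambda>(i,k). if k = j then v i else f i k))"
    by (rule det_col_lin[OF j])
  have m2: "mat n n (\<lambda>(i,k). if k = j then u i else f i k) =
        mat n n (\<lambda>(i,k). FP a (a (L i + n - 1 - i)) ((mu(j := Suc (mu j))) k + n - 1 - k))"
    by (rule mat_eq_lam) (simp add: u_def f_def Y_def)
  have m3: "mat n n (\<lambda>(i,k). if k = j then v i else f i k) = mat n n (\<lambda>(i,k). FP a (a (L i + n - 1 - i)) (mu k + n - 1 - k))"
    by (rule mat_eq_lam) (simp add: v_def f_def Y_def)
  have m0: "mat n n (\<lambda>(i,k). if k = j then a (L i + n - 1 - i) * FP a (a (L i + n - 1 - i)) (mu k + n - 1 - k) else FP a (a (L i + n - 1 - i)) (mu k + n - 1 - k))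
     = mat n n (\<lambda>(i,k). if k = j then Y i * f i k else f i k)"
    by (rule mat_eq_lam) (simp add: f_def Y_def)
  have "det (mat n n (\<lambda>(i,k). if k = j then a (L i + n - 1 - i) * FP a (a (L i + n - 1 - i)) (mu k + n - 1 - k) else FP a (a (L i + n - 1 - i)) (mu k + n - 1 - k)))
     = det (mat n n (\<lambda>(i,k). if k = j then u i + c * v i else f i k))" by (simp only: m0 m1)
  also have "\<dots> = det (mat n n (\<lambda>(i,k). if k = j then u i else f i k)) + c * det (mat n n (\<lambda>(i,k). if k = j then v i else f i k))"
    by (rule d)
  also have "\<dots> = gdet a n L (mu(j := Suc (mu j))) + c * gdet a n L mu" by (simp only: m2 m3 gdet_def)
  finally show ?thesis by (simp only: c_def)
qed

lemma pieri:
  fixes a :: "nat \<Rightarrow> 'a::comm_ring_1"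
  assumes Ld: "\<And>i. Suc i < n \<Longrightarrow> L (Suc i) \<le> L i"
    and md: "\<And>i. Suc i < n \<Longrightarrow> mu (Suc i) \<le> mu i"
    and ml: "\<And>i. i < n \<Longrightarrow> mu i \<le> L i"
  shows "((\<Sum>i<n. a (L i + n - 1 - i)) - (\<Sum>j<n. a (mu j + n - 1 - j))) * gdet a n L mu =
         (\<Sum>r\<in>addable n L mu. gdet a n L (mu(r := Suc (mu r))))"
proof -
  have s1: "(\<Sum>i<n. a (L i + n - 1 - i)) * gdet a n L mu = (\<Sum>j<n. det (mat n n (\<lambda>(i,k). if k = j then a (L i + n - 1 - i) * FP a (a (L i + n - 1 - i)) (mu k + n - 1 - k) else FP a (a (L i + n - 1 - i)) (mu k + n - 1 - k))))"
    unfolding gdet_def by (rule det_scale_cols[symmetric])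
  have s2: "(\<Sum>j<n. det (mat n n (\<lambda>(i,k). if k = j then a (L i + n - 1 - i) * FP a (a (L i + n - 1 - i)) (mu k + n - 1 - k) else FP a (a (L i + n - 1 - i)) (mu k + n - 1 - k))))
     = (\<Sum>j<n. gdet a n L (mu(j := Suc (mu j))) + a (mu j + n - 1 - j) * gdet a n L mu)"
    by (rule sum.cong[OF refl]) (rule pieri_col, simp)
  have s3: "(\<Sum>j<n. gdet a n L (mu(j := Suc (mu j)))) = (\<Sum>j\<in>addable n L mu. gdet a n L (mu(j := Suc (mu j))))"
  proof (rule sum.mono_neutral_right)
    show "addable n L mu \<subseteq> {..<n}" by (auto simp: addable_def)
    show "\<forall>i\<in>{..<n} - addable n L mu. gdet a n L (mu(i := Suc (mu i))) = 0"
      using gdet_zero_nonadd[of n L mu, OF Ld md ml] by blast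
  qed simp
  have "(\<Sum>i<n. a (L i + n - 1 - i)) * gdet a n L mu = (\<Sum>j<n. gdet a n L (mu(j := Suc (mu j))) + a (mu j + n - 1 - j) * gdet a n L mu)"
    using s1 s2 by simp
  also have "\<dots> = (\<Sum>j<n. gdet a n L (mu(j := Suc (mu j)))) + (\<Sum>j<n. a (mu j + n - 1 - j)) * gdet a n L mu"
    by (simp only: sum.distrib sum_distrib_right)
  finally have "(\<Sum>i<n. a (L i + n - 1 - i)) * gdet a n L mu = (\<Sum>j\<in>addable n L mu. gdet a n L (mu(j := Suc (mu j)))) + (\<Sum>j<n. a (mu j + n - 1 - j)) * gdet a n L mu"
    using s3 by simp
  thus ?thesis by (simp add: left_diff_distrib)
qed

lemma gdet_top:
  assumes Ld: "\<And>i. Suc i < n \<Longrightarrow> L (Suc i) \<le> L i"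
  shows "gdet a n L L = (\<Prod>i<n. FP a (a (L i + n - 1 - i)) (L i + n - 1 - i))"
  unfolding gdet_def
proof (rule det_triangular)
  fix i k assume ik: "k < i" "i < n"
  have "L i \<le> L k" using mono_cons[of n L k i, OF Ld] ik by simp
  hence "L i + n - 1 - i < L k + n - 1 - k" using ik by simp
  thus "FP a (a (L i + n - 1 - i)) (L k + n - 1 - k) = 0" by (rule FP_vanish)
qed

lemma gdet_bot:
  "gdet a n L (\<lambda>_. 0) = (\<Prod>i<n. \<Prod>k\<in>{i<..<n}. (a (L i + n - 1 - i) - a (L k + n - 1 - k)))"
  unfolding gdet_def using vdm[where z="\<lambda>i. a (L i + n - 1 - i)" and N=n and a=a] by simp


definition SYTs :: "(nat \<times> nat) set \<Rightarrow> (nat \<times> nat \<Rightarrow> nat) set" where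
  "SYTs S = {T. bij_betw T S {1..card S}
      \<and> (\<forall>i j. (i, j) \<in> S \<and> (i, j + 1) \<in> S \<longrightarrow> T (i, j) < T (i, j + 1))
      \<and> (\<forall>i j. (i, j) \<in> S \<and> (i + 1, j) \<in> S \<longrightarrow> T (i, j) < T (i + 1, j))
      \<and> (\<forall>b. b \<notin> S \<longrightarrow> T b = 0)}"

definition wS :: "(nat \<times> nat) set \<Rightarrow> (int \<Rightarrow> 'a::field) \<Rightarrow> (nat \<times> nat \<Rightarrow> nat) \<Rightarrow> 'a" where
  "wS S x T = (\<Prod>k=1..card S. 1 / (\<Sum>l=1..k. x (content (inv_into S T (card S + 1 - l)))))"

definition amin :: "(nat \<times> nat) set \<Rightarrow> (nat \<times> nat) set" where
  "amin S = {b\<in>S. (\<forall>i'. fst b = Suc i' \<longrightarrow> (i', snd b) \<notin> S) \<and> (\<forall>j'. snd b = Suc j' \<longrightarrow> (fst b, j') \<notin> S)}"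

definition incT :: "(nat \<times> nat) set \<Rightarrow> nat \<times> nat \<Rightarrow> (nat \<times> nat \<Rightarrow> nat) \<Rightarrow> (nat \<times> nat \<Rightarrow> nat)" where
  "incT S b T = (\<lambda>p. if p = b then 1 else if p \<in> S then T p + 1 else 0)"

definition decT :: "nat \<times> nat \<Rightarrow> (nat \<times> nat \<Rightarrow> nat) \<Rightarrow> (nat \<times> nat \<Rightarrow> nat)" where
  "decT b T = (\<lambda>p. if p = b then 0 else T p - 1)"

lemma SYTs_finite: "finite S \<Longrightarrow> finite (SYTs S)"
proof -
  assume fS: "finite S"
  have "SYTs S \<subseteq> {f. \<forall>x. (x \<in> S \<longrightarrow> f x \<in> {0..card S}) \<and> (x \<notin> S \<longrightarrow> f x = 0)}"
    by (auto simp: SYTs_def bij_betw_def)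
  moreover have "finite {f. \<forall>x. (x \<in> S \<longrightarrow> f x \<in> {0..card S}) \<and> (x \<notin> S \<longrightarrow> f x = (0::nat))}"
    by (rule finite_set_of_finite_funs) (use fS in auto)
  ultimately show ?thesis by (rule finite_subset)
qed

lemma SYTs_pos: "T \<in> SYTs S \<Longrightarrow> p \<in> S \<Longrightarrow> 1 \<le> T p \<and> T p \<le> card S"
  unfolding SYTs_def bij_betw_def by auto

lemma SYTs_out: "T \<in> SYTs S \<Longrightarrow> p \<notin> S \<Longrightarrow> T p = 0"
  unfolding SYTs_def by blast

lemma SYTs_row: "T \<in> SYTs S \<Longrightarrow> (i, j) \<in> S \<Longrightarrow> (i, j + 1) \<in> S \<Longrightarrow> T (i, j) < T (i, j + 1)"
  unfolding SYTs_def by blast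

lemma SYTs_col: "T \<in> SYTs S \<Longrightarrow> (i, j) \<in> S \<Longrightarrow> (i + 1, j) \<in> S \<Longrightarrow> T (i, j) < T (i + 1, j)"
  unfolding SYTs_def by blast

lemma SYTs_bij: "T \<in> SYTs S \<Longrightarrow> bij_betw T S {1..card S}"
  unfolding SYTs_def by blast

lemma incT_SYTs:
  assumes fS: "finite S" and b: "b \<in> amin S" and T: "T \<in> SYTs (S - {b})"
  shows "incT S b T \<in> SYTs S"
proof -
  have bS: "b \<in> S" using b by (simp add: amin_def)
  have cS: "card S = Suc (card (S - {b}))" by (rule card_Suc_Diff1[OF fS bS, symmetric])
  let ?T = "incT S b T"
  have Tb: "bij_betw T (S - {b}) {1..card (S - {b})}" using T by (simp add: SYTs_def)
  have Trow: "\<And>i j. (i, j) \<in> S - {b} \<Longrightarrow> (i, j + 1) \<in> S - {b} \<Longrightarrow> T (i, j) < T (i, j + 1)"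
    using T unfolding SYTs_def by blast
  have Tcol: "\<And>i j. (i, j) \<in> S - {b} \<Longrightarrow> (i + 1, j) \<in> S - {b} \<Longrightarrow> T (i, j) < T (i + 1, j)"
    using T unfolding SYTs_def by blast
  have pos: "\<And>p. p \<in> S - {b} \<Longrightarrow> 1 \<le> T p \<and> T p \<le> card (S - {b})" using SYTs_pos[OF T] by blast
  have Tv: "\<And>p. ?T p = (if p = b then 1 else if p \<in> S then T p + 1 else 0)" by (simp add: incT_def)
  have bij: "bij_betw ?T S {1..card S}"
  proof (rule bij_betw_imageI)
    show "inj_on ?T S"
    proof (rule inj_onI)
      fix p q assume pq: "p \<in> S" "q \<in> S" "?T p = ?T q"
      show "p = q"
      proof (cases "p = b \<or> q = b")
        case True
        show ?thesis
        proof (rule ccontr)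
          assume ne: "p \<noteq> q"
          show False
          proof (cases "p = b")
            case True
            hence "q \<in> S - {b}" using ne pq by auto
            hence "?T q = T q + 1" "?T p = 1" using True by (auto simp: Tv)
            thus False using pos[OF \<open>q \<in> S - {b}\<close>] pq by simp
          next
            case False
            hence qb: "q = b" using \<open>p = b \<or> q = b\<close> by simp
            hence "p \<in> S - {b}" using ne pq by auto
            hence "?T p = T p + 1" "?T q = 1" using qb by (auto simp: Tv)
            thus False using pos[OF \<open>p \<in> S - {b}\<close>] pq by simp
          qed
        qed
      next
        case False
        hence "T p = T q" using pq by (simp add: Tv)
        thus ?thesis using Tb pq False unfolding bij_betw_def inj_on_def by blast
      qed
    qed
    show "?T ` S = {1..card S}"
    proof
      show "?T ` S \<subseteq> {1..card S}"
      proof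
        fix v assume "v \<in> ?T ` S"
        then obtain p where p: "p \<in> S" "v = ?T p" by blast
        show "v \<in> {1..card S}"
        proof (cases "p = b")
          case True thus ?thesis using p cS by (simp add: Tv)
        next
          case False thus ?thesis using p cS pos[of p] by (simp add: Tv)
        qed
      qed
      show "{1..card S} \<subseteq> ?T ` S"
      proof
        fix v assume v: "v \<in> {1..card S}"
        show "v \<in> ?T ` S"
        proof (cases "v = 1")
          case True
          hence "?T b = v" by (simp add: Tv)
          thus ?thesis using bS by (metis image_eqI)
        next
          case False
          hence "v - 1 \<in> {1..card (S - {b})}" using v cS by auto
          then obtain p where p: "p \<in> S - {b}" "T p = v - 1" using Tb unfolding bij_betw_def by (metis imageE)
          hence "?T p = v" using False v by (simp add: Tv)
          thus ?thesis using p by (metis DiffD1 image_eqI)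
        qed
      qed
    qed
  qed
  have row: "?T (i, j) < ?T (i, j + 1)" if ij: "(i, j) \<in> S" "(i, j + 1) \<in> S" for i j
  proof -
    have nb: "(i, j + 1) \<noteq> b" using b ij unfolding amin_def by auto
    have p1: "?T (i, j + 1) = T (i, j + 1) + 1" using nb ij by (simp add: Tv)
    show ?thesis
    proof (cases "(i, j) = b")
      case True thus ?thesis using p1 pos[of "(i, j + 1)"] nb ij by (simp add: Tv)
    next
      case False
      hence "T (i, j) < T (i, j + 1)" using Trow ij nb by blast
      thus ?thesis using p1 False ij by (simp add: Tv)
    qed
  qed
  have col: "?T (i, j) < ?T (i + 1, j)" if ij: "(i, j) \<in> S" "(i + 1, j) \<in> S" for i j
  proof -
    have nb: "(i + 1, j) \<noteq> b" using b ij unfolding amin_def by auto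
    have p1: "?T (i + 1, j) = T (i + 1, j) + 1" using nb ij by (simp add: Tv)
    show ?thesis
    proof (cases "(i, j) = b")
      case True thus ?thesis using p1 pos[of "(i + 1, j)"] nb ij by (simp add: Tv)
    next
      case False
      hence "T (i, j) < T (i + 1, j)" using Tcol ij nb by blast
      thus ?thesis using p1 False ij by (simp add: Tv)
    qed
  qed
  have out: "\<forall>p. p \<notin> S \<longrightarrow> ?T p = 0" using bS by (auto simp: Tv)
  show ?thesis unfolding SYTs_def using bij row col out by blast
qed

lemma decT_SYTs:
  assumes fS: "finite S" and T: "T \<in> SYTs S" and bS: "b \<in> S" and Tb1: "T b = 1"
  shows "decT b T \<in> SYTs (S - {b})"
proof -
  have cS: "card S = Suc (card (S - {b}))" by (rule card_Suc_Diff1[OF fS bS, symmetric])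
  have Tb: "bij_betw T S {1..card S}" using T by (simp add: SYTs_def)
  have inj: "inj_on T S" using Tb by (simp add: bij_betw_def)
  have ge2: "\<And>p. p \<in> S - {b} \<Longrightarrow> 2 \<le> T p"
  proof -
    fix p assume p: "p \<in> S - {b}"
    have "T p \<noteq> 1" using inj p bS Tb1 by (metis DiffE inj_on_contraD singletonI)
    thus "2 \<le> T p" using SYTs_pos[OF T, of p] p by auto
  qed
  let ?D = "decT b T"
  have bij: "bij_betw ?D (S - {b}) {1..card (S - {b})}"
  proof (rule bij_betw_imageI)
    show "inj_on ?D (S - {b})"
    proof (rule inj_onI)
      fix p q assume pq: "p \<in> S - {b}" "q \<in> S - {b}" "?D p = ?D q"
      hence "T p = T q" using ge2[of p] ge2[of q] by (auto simp: decT_def)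
      thus "p = q" using inj pq by (auto simp: inj_on_def)
    qed
    show "?D ` (S - {b}) = {1..card (S - {b})}"
    proof
      show "?D ` (S - {b}) \<subseteq> {1..card (S - {b})}"
      proof
        fix v assume "v \<in> ?D ` (S - {b})"
        then obtain p where p: "p \<in> S - {b}" "v = ?D p" by blast
        have "v = T p - 1" using p by (simp add: decT_def)
        moreover have "2 \<le> T p" "T p \<le> card S" using ge2[OF p(1)] SYTs_pos[OF T, of p] p(1) by auto
        ultimately show "v \<in> {1..card (S - {b})}" using cS by auto
      qed
      show "{1..card (S - {b})} \<subseteq> ?D ` (S - {b})"
      proof
        fix v assume v: "v \<in> {1..card (S - {b})}"
        hence "v + 1 \<in> {1..card S}" using cS by auto
        hence "v + 1 \<in> T ` S" using Tb by (simp add: bij_betw_def)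
        then obtain p where p: "p \<in> S" "T p = v + 1" by (metis imageE)
        have "p \<noteq> b" using p Tb1 v by auto
        hence "?D p = v" using p by (simp add: decT_def)
        thus "v \<in> ?D ` (S - {b})" using p \<open>p \<noteq> b\<close> by force
      qed
    qed
  qed
  have Trow: "\<And>i j. (i, j) \<in> S \<Longrightarrow> (i, j + 1) \<in> S \<Longrightarrow> T (i, j) < T (i, j + 1)"
    using T unfolding SYTs_def by blast
  have Tcol: "\<And>i j. (i, j) \<in> S \<Longrightarrow> (i + 1, j) \<in> S \<Longrightarrow> T (i, j) < T (i + 1, j)"
    using T unfolding SYTs_def by blast
  have row: "?D (i, j) < ?D (i, j + 1)" if "(i, j) \<in> S - {b}" "(i, j + 1) \<in> S - {b}" for i j
  proof -
    have "T (i, j) < T (i, j + 1)" using Trow that by blast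
    thus ?thesis using that ge2[of "(i,j)"] by (simp add: decT_def)
  qed
  have col: "?D (i, j) < ?D (i + 1, j)" if "(i, j) \<in> S - {b}" "(i + 1, j) \<in> S - {b}" for i j
  proof -
    have "T (i, j) < T (i + 1, j)" using Tcol that by blast
    thus ?thesis using that ge2[of "(i,j)"] by (simp add: decT_def)
  qed
  have Tout: "\<And>p. p \<notin> S \<Longrightarrow> T p = 0" using T unfolding SYTs_def by blast
  have out: "?D p = 0" if "p \<notin> S - {b}" for p
    using that Tout[of p] by (cases "p = b") (auto simp: decT_def)
  show ?thesis unfolding SYTs_def using bij row col out by blast
qed

lemma one_amin:
  assumes T: "T \<in> SYTs S" and bS: "b \<in> S" and Tb1: "T b = 1"
  shows "b \<in> amin S"
proof -
  obtain bi bj where bb: "b = (bi, bj)" by (cases b)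
  have "(i', bj) \<notin> S" if "bi = Suc i'" for i'
  proof
    assume a: "(i', bj) \<in> S"
    have "\<forall>i j. (i, j) \<in> S \<and> (i + 1, j) \<in> S \<longrightarrow> T (i, j) < T (i + 1, j)" using T by (simp add: SYTs_def)
    hence "T (i', bj) < T (i' + 1, bj)" using a bS bb that by simp
    hence "T (i', bj) < 1" using that Tb1 bb by simp
    thus False using SYTs_pos[OF T a] by simp
  qed
  moreover have "(bi, j') \<notin> S" if "bj = Suc j'" for j'
  proof
    assume a: "(bi, j') \<in> S"
    have "\<forall>i j. (i, j) \<in> S \<and> (i, j + 1) \<in> S \<longrightarrow> T (i, j) < T (i, j + 1)" using T by (simp add: SYTs_def)
    hence "T (bi, j') < T (bi, j' + 1)" using a bS bb that by simp
    hence "T (bi, j') < 1" using that Tb1 bb by simp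
    thus False using SYTs_pos[OF T a] by simp
  qed
  ultimately show ?thesis using bS bb by (simp add: amin_def)
qed


definition Phi :: "(nat \<times> nat) set \<Rightarrow> (int \<Rightarrow> 'a::field) \<Rightarrow> 'a" where
  "Phi S x = (\<Sum>T\<in>SYTs S. wS S x T)"

lemma inc_dec:
  assumes T: "T \<in> SYTs S" and bS: "b \<in> S" and Tb1: "T b = 1"
  shows "incT S b (decT b T) = T"
proof
  fix p
  have Tout: "p \<notin> S \<Longrightarrow> T p = 0" by (rule SYTs_out[OF T])
  show "incT S b (decT b T) p = T p"
  proof (cases "p = b")
    case True thus ?thesis using Tb1 by (simp add: incT_def)
  next
    case False
    show ?thesis
    proof (cases "p \<in> S")
      case True
      hence "1 \<le> T p" using SYTs_pos[OF T] by blast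
      thus ?thesis using True False by (simp add: incT_def decT_def)
    next
      case False2: False
      thus ?thesis using False Tout by (simp add: incT_def decT_def)
    qed
  qed
qed

lemma dec_inc:
  assumes T: "T \<in> SYTs (S - {b})"
  shows "decT b (incT S b T) = T"
proof (rule ext)
  fix p
  have Tout: "p \<notin> S - {b} \<Longrightarrow> T p = 0" by (rule SYTs_out[OF T])
  have d: "decT b (incT S b T) p = (if p = b then 0 else incT S b T p - 1)" by (simp add: decT_def)
  have i: "incT S b T p = (if p = b then 1 else if p \<in> S then T p + 1 else 0)" by (simp add: incT_def)
  show "decT b (incT S b T) p = T p"
  proof (cases "p = b")
    case True
    hence "T p = 0" by (intro Tout) simp
    thus ?thesis using True d by simp
  next
    case False
    show ?thesis
    proof (cases "p \<in> S")
      case True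
      thus ?thesis using False d i by simp
    next
      case False2: False
      have "T p = 0" using False2 by (intro Tout) simp
      thus ?thesis using False False2 d i by simp
    qed
  qed
qed

lemma SYTs_bij2:
  assumes fS: "finite S" and ne: "S \<noteq> {}"
  shows "bij_betw (\<lambda>(b,T). incT S b T) (SIGMA b:amin S. SYTs (S - {b})) (SYTs S)"
proof (rule bij_betw_imageI)
  show "inj_on (\<lambda>(b,T). incT S b T) (SIGMA b:amin S. SYTs (S - {b}))"
  proof (rule inj_onI)
    fix u v assume u: "u \<in> (SIGMA b:amin S. SYTs (S - {b}))" and v: "v \<in> (SIGMA b:amin S. SYTs (S - {b}))"
      and e: "(\<lambda>(b,T). incT S b T) u = (\<lambda>(b,T). incT S b T) v"
    obtain b1 T1 where u1: "u = (b1, T1)" "b1 \<in> amin S" "T1 \<in> SYTs (S - {b1})" using u by blast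
    obtain b2 T2 where v1: "v = (b2, T2)" "b2 \<in> amin S" "T2 \<in> SYTs (S - {b2})" using v by blast
    have e': "incT S b1 T1 = incT S b2 T2" using e u1 v1 by simp
    have b1S: "b1 \<in> S" and b2S: "b2 \<in> S" using u1 v1 by (auto simp: amin_def)
    have U: "incT S b1 T1 \<in> SYTs S" by (rule incT_SYTs[OF fS u1(2,3)])
    hence inj: "inj_on (incT S b1 T1) S" using SYTs_bij bij_betw_def by blast
    have h0: "incT S b2 T2 b2 = 1" by (simp add: incT_def)
    have "incT S b1 T1 b1 = 1" by (simp add: incT_def)
    moreover have "incT S b1 T1 b2 = 1" using e' h0 by simp
    ultimately have "b1 = b2" using inj b1S b2S by (metis inj_on_contraD)
    moreover have "T1 = T2" using dec_inc[OF u1(3)] dec_inc[OF v1(3)] e' \<open>b1 = b2\<close> by metis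
    ultimately show "u = v" using u1 v1 by simp
  qed
  show "(\<lambda>(b,T). incT S b T) ` (SIGMA b:amin S. SYTs (S - {b})) = SYTs S"
  proof
    show "(\<lambda>(b,T). incT S b T) ` (SIGMA b:amin S. SYTs (S - {b})) \<subseteq> SYTs S"
    proof
      fix U assume "U \<in> (\<lambda>(b,T). incT S b T) ` (SIGMA b:amin S. SYTs (S - {b}))"
      then obtain u where u: "u \<in> (SIGMA b:amin S. SYTs (S - {b}))" "U = (\<lambda>(b,T). incT S b T) u" by (rule imageE)
      then obtain b T where "b \<in> amin S" "T \<in> SYTs (S - {b})" "U = incT S b T" by (cases u) auto
      thus "U \<in> SYTs S" using incT_SYTs[OF fS] by blast
    qed
    show "SYTs S \<subseteq> (\<lambda>(b,T). incT S b T) ` (SIGMA b:amin S. SYTs (S - {b}))"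
    proof
      fix T assume T: "T \<in> SYTs S"
      have Tb: "bij_betw T S {1..card S}" by (rule SYTs_bij[OF T])
      have "card S \<ge> 1" using fS ne by (simp add: Suc_le_eq card_gt_0_iff)
      hence "1 \<in> T ` S" using Tb by (simp add: bij_betw_def)
      then obtain b where b: "b \<in> S" "T b = 1" by (metis imageE)
      have ba: "b \<in> amin S" by (rule one_amin[OF T b])
      have "decT b T \<in> SYTs (S - {b})" by (rule decT_SYTs[OF fS T b])
      moreover have "incT S b (decT b T) = T" by (rule inc_dec[OF T b])
      ultimately show "T \<in> (\<lambda>(b,T). incT S b T) ` (SIGMA b:amin S. SYTs (S - {b}))"
        using ba by (metis (no_types, lifting) SigmaI case_prod_conv image_eqI)
    qed
  qed
qed

lemma full_sum:
  assumes T: "T \<in> SYTs S"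
  shows "(\<Sum>l=1..card S. x (content (inv_into S T (card S + 1 - l)))) = (\<Sum>p\<in>S. x (content p))"
proof -
  have Tb: "bij_betw T S {1..card S}" by (rule SYTs_bij[OF T])
  have inj: "inj_on T S" and img: "T ` S = {1..card S}" using Tb by (simp_all add: bij_betw_def)
  let ?g = "\<lambda>v. x (content (inv_into S T v))"
  have "(\<Sum>l=1..card S. x (content (inv_into S T (card S + 1 - l)))) = (\<Sum>v=1..card S. ?g v)"
    using sum.atLeastAtMost_rev[of ?g 1 "card S"] by simp
  also have "\<dots> = (\<Sum>v\<in>T ` S. ?g v)" by (simp only: img)
  also have "\<dots> = (\<Sum>p\<in>S. ?g (T p))" by (rule sum.reindex[OF inj, unfolded comp_def])
  also have "\<dots> = (\<Sum>p\<in>S. x (content p))"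
    by (rule sum.cong[OF refl]) (simp add: inv_into_f_f[OF inj])
  finally show ?thesis .
qed

lemma w_inc:
  assumes fS: "finite S" and b: "b \<in> amin S" and T': "T' \<in> SYTs (S - {b})"
  shows "wS S x (incT S b T') = (1 / (\<Sum>p\<in>S. x (content p))) * wS (S - {b}) x T'"
proof -
  let ?T = "incT S b T'"
  have bS: "b \<in> S" using b by (simp add: amin_def)
  define m' where "m' = card (S - {b})"
  have cS: "card S = Suc m'" unfolding m'_def by (rule card_Suc_Diff1[OF fS bS, symmetric])
  have TS: "?T \<in> SYTs S" by (rule incT_SYTs[OF fS b T'])
  have injT: "inj_on ?T S" using SYTs_bij[OF TS] bij_betw_def by blast
  have T'b: "bij_betw T' (S - {b}) {1..m'}" unfolding m'_def by (rule SYTs_bij[OF T'])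
  have inv: "inv_into S ?T v = inv_into (S - {b}) T' (v - 1)" if v: "2 \<le> v" "v \<le> Suc m'" for v
  proof -
    let ?q = "inv_into (S - {b}) T' (v - 1)"
    have "v - 1 \<in> {1..m'}" using v by auto
    hence "v - 1 \<in> T' ` (S - {b})" using T'b by (simp add: bij_betw_def)
    hence q: "?q \<in> S - {b}" "T' ?q = v - 1" by (rule inv_into_into, rule f_inv_into_f)
    hence "?T ?q = v" using v by (simp add: incT_def)
    have "?q \<in> S" using q by blast
    hence "inv_into S ?T (?T ?q) = ?q" by (rule inv_into_f_f[OF injT])
    thus ?thesis using \<open>?T ?q = v\<close> by simp
  qed
  define F where "F k = 1 / (\<Sum>l=1..k. x (content (inv_into S ?T (card S + 1 - l))))" for k
  have Fk: "F k = 1 / (\<Sum>l=1..k. x (content (inv_into (S - {b}) T' (m' + 1 - l))))" if k: "k \<in> {1..m'}" for k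
  proof -
    have "(\<Sum>l=1..k. x (content (inv_into S ?T (card S + 1 - l)))) = (\<Sum>l=1..k. x (content (inv_into (S - {b}) T' (m' + 1 - l))))"
    proof (rule sum.cong[OF refl])
      fix l assume l: "l \<in> {1..k}"
      have "inv_into S ?T (Suc m' + 1 - l) = inv_into (S - {b}) T' (Suc m' + 1 - l - 1)"
        by (rule inv) (use l k in auto)
      moreover have "Suc m' + 1 - l - 1 = m' + 1 - l" using l k by auto
      ultimately show "x (content (inv_into S ?T (card S + 1 - l))) = x (content (inv_into (S - {b}) T' (m' + 1 - l)))"
        using cS by simp
    qed
    thus ?thesis by (simp add: F_def)
  qed
  have Fm: "F (Suc m') = 1 / (\<Sum>p\<in>S. x (content p))"
    using full_sum[OF TS, of x] cS by (simp add: F_def)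
  have "wS S x ?T = (\<Prod>k=1..Suc m'. F k)" by (simp add: wS_def F_def cS)
  also have "\<dots> = (\<Prod>k=1..m'. F k) * F (Suc m')" by simp
  also have "(\<Prod>k=1..m'. F k) = wS (S - {b}) x T'"
    unfolding wS_def m'_def[symmetric] by (rule prod.cong[OF refl]) (simp add: Fk)
  finally show ?thesis using Fm by simp
qed

lemma Phi_rec:
  assumes fS: "finite S" and ne: "S \<noteq> {}"
  shows "Phi S x = (1 / (\<Sum>p\<in>S. x (content p))) * (\<Sum>b\<in>amin S. Phi (S - {b}) x)"
proof -
  have fa: "finite (amin S)" using fS by (rule finite_subset[rotated]) (auto simp: amin_def)
  have "Phi S x = (\<Sum>u\<in>(SIGMA b:amin S. SYTs (S - {b})). wS S x ((\<lambda>(b,T). incT S b T) u))"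
    unfolding Phi_def by (rule sum.reindex_bij_betw[OF SYTs_bij2[OF fS ne], symmetric])
  also have "\<dots> = (\<Sum>(b,T)\<in>(SIGMA b:amin S. SYTs (S - {b})). wS S x (incT S b T))"
    by (rule sum.cong) auto
  also have "\<dots> = (\<Sum>b\<in>amin S. \<Sum>T\<in>SYTs (S - {b}). wS S x (incT S b T))"
    by (rule sum.Sigma[symmetric]) (use fa fS SYTs_finite in auto)
  also have "\<dots> = (\<Sum>b\<in>amin S. \<Sum>T\<in>SYTs (S - {b}). (1 / (\<Sum>p\<in>S. x (content p))) * wS (S - {b}) x T)"
    by (intro sum.cong refl) (simp add: w_inc[OF fS])
  also have "\<dots> = (1 / (\<Sum>p\<in>S. x (content p))) * (\<Sum>b\<in>amin S. Phi (S - {b}) x)"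
    by (simp add: Phi_def sum_distrib_left)
  finally show ?thesis .
qed

lemma Phi_empty: "Phi {} x = 1"
proof -
  have "SYTs {} = {\<lambda>_. 0}"
  proof
    show "SYTs {} \<subseteq> {\<lambda>_. 0}"
    proof
      fix T assume "T \<in> SYTs {}"
      hence "\<forall>b. T b = 0" unfolding SYTs_def by blast
      thus "T \<in> {\<lambda>_. 0}" by (simp add: fun_eq_iff)
    qed
    have "bij_betw (\<lambda>_. 0::nat) {} {1..card ({}::(nat\<times>nat) set)}" by (simp add: bij_betw_def)
    thus "{\<lambda>_. 0} \<subseteq> SYTs {}" unfolding SYTs_def by blast
  qed
  thus ?thesis by (simp add: Phi_def wS_def)
qed


definition Sk :: "nat \<Rightarrow> (nat \<Rightarrow> nat) \<Rightarrow> (nat \<Rightarrow> nat) \<Rightarrow> (nat \<times> nat) set" where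
  "Sk n L mu = {(i, j). 1 \<le> i \<and> i \<le> n \<and> mu (i - 1) < j \<and> j \<le> L (i - 1)}"

definition valid :: "nat \<Rightarrow> (nat \<Rightarrow> nat) \<Rightarrow> (nat \<Rightarrow> nat) \<Rightarrow> bool" where
  "valid n L mu \<longleftrightarrow> (\<forall>i. Suc i < n \<longrightarrow> mu (Suc i) \<le> mu i) \<and> (\<forall>i. i < n \<longrightarrow> mu i \<le> L i)"

lemma Sk_img: "Sk n L mu = (\<lambda>(r, c). (Suc r, c)) ` (SIGMA r:{..<n}. {mu r<..L r})"
proof
  show "Sk n L mu \<subseteq> (\<lambda>(r, c). (Suc r, c)) ` (SIGMA r:{..<n}. {mu r<..L r})"
  proof
    fix p assume "p \<in> Sk n L mu"
    then obtain i j where p: "p = (i, j)" "1 \<le> i" "i \<le> n" "mu (i - 1) < j" "j \<le> L (i - 1)"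
      unfolding Sk_def by blast
    hence "(i - 1, j) \<in> (SIGMA r:{..<n}. {mu r<..L r})" "p = (\<lambda>(r, c). (Suc r, c)) (i - 1, j)" by auto
    thus "p \<in> (\<lambda>(r, c). (Suc r, c)) ` (SIGMA r:{..<n}. {mu r<..L r})" by (rule rev_image_eqI)
  qed
  show "(\<lambda>(r, c). (Suc r, c)) ` (SIGMA r:{..<n}. {mu r<..L r}) \<subseteq> Sk n L mu"
    unfolding Sk_def by auto
qed

lemma Sk_finite: "finite (Sk n L mu)"
  unfolding Sk_img by (intro finite_imageI finite_SigmaI) auto

lemma Sk_mem: "(i, j) \<in> Sk n L mu \<longleftrightarrow> 1 \<le> i \<and> i \<le> n \<and> mu (i - 1) < j \<and> j \<le> L (i - 1)"
  unfolding Sk_def by simp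

lemma amin_Sk:
  assumes Ld: "\<And>i. Suc i < n \<Longrightarrow> L (Suc i) \<le> L i" and v: "valid n L mu"
  shows "amin (Sk n L mu) = (\<lambda>r. (Suc r, Suc (mu r))) ` addable n L mu"
proof
  have md: "\<And>i. Suc i < n \<Longrightarrow> mu (Suc i) \<le> mu i" using v by (simp add: valid_def)
  show "amin (Sk n L mu) \<subseteq> (\<lambda>r. (Suc r, Suc (mu r))) ` addable n L mu"
  proof
    fix p assume p: "p \<in> amin (Sk n L mu)"
    obtain i j where ij: "p = (i, j)" by (cases p)
    have pS: "(i, j) \<in> Sk n L mu" using p ij by (simp add: amin_def)
    then obtain r where r: "i = Suc r" "r < n" "mu r < j" "j \<le> L r" unfolding Sk_mem
      by (metis Suc_le_eq Suc_pred diff_Suc_1 le_eq_less_or_eq less_one not_less_eq_eq)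
    have left: "\<And>j'. j = Suc j' \<Longrightarrow> (i, j') \<notin> Sk n L mu" using p ij by (simp add: amin_def)
    have up: "\<And>i'. i = Suc i' \<Longrightarrow> (i', j) \<notin> Sk n L mu" using p ij by (simp add: amin_def)
    have jv: "j = Suc (mu r)"
    proof (rule ccontr)
      assume "j \<noteq> Suc (mu r)"
      hence "mu r < j - 1" using r by simp
      moreover have "j = Suc (j - 1)" using r by simp
      ultimately have "(i, j - 1) \<notin> Sk n L mu" using left by blast
      thus False using r \<open>mu r < j - 1\<close> by (simp add: Sk_mem)
    qed
    have "r = 0 \<or> mu r < mu (r - 1)"
    proof (cases r)
      case (Suc r')
      have "(r, j) \<notin> Sk n L mu" using up r by simp
      moreover have "L r \<le> L r'" using Ld[of r'] Suc r by simp
      ultimately have "\<not> mu r' < j" using Suc r by (simp add: Sk_mem)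
      thus ?thesis using Suc jv by simp
    qed simp
    hence "r \<in> addable n L mu" using r unfolding addable_def by simp
    thus "p \<in> (\<lambda>r. (Suc r, Suc (mu r))) ` addable n L mu" using ij r jv by simp
  qed
  show "(\<lambda>r. (Suc r, Suc (mu r))) ` addable n L mu \<subseteq> amin (Sk n L mu)"
  proof
    fix p assume "p \<in> (\<lambda>r. (Suc r, Suc (mu r))) ` addable n L mu"
    then obtain r where r: "r \<in> addable n L mu" "p = (Suc r, Suc (mu r))" by blast
    have ra: "r < n" "mu r < L r" "r = 0 \<or> mu r < mu (r - 1)" using r unfolding addable_def by auto
    have pS: "p \<in> Sk n L mu" using r ra by (simp add: Sk_mem)
    have "\<And>i'. Suc r = Suc i' \<Longrightarrow> (i', Suc (mu r)) \<notin> Sk n L mu"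
    proof -
      fix i' assume "Suc r = Suc i'"
      hence "i' = r" by simp
      show "(i', Suc (mu r)) \<notin> Sk n L mu"
      proof (cases r)
        case 0 thus ?thesis using \<open>i' = r\<close> by (simp add: Sk_mem)
      next
        case (Suc r')
        hence "mu r < mu r'" using ra by simp
        thus ?thesis using \<open>i' = r\<close> Suc by (simp add: Sk_mem)
      qed
    qed
    moreover have "\<And>j'. Suc (mu r) = Suc j' \<Longrightarrow> (Suc r, j') \<notin> Sk n L mu"
      by (simp add: Sk_mem)
    ultimately show "p \<in> amin (Sk n L mu)" using pS r by (simp add: amin_def)
  qed
qed

lemma Sk_remove:
  assumes r: "r \<in> addable n L mu"
  shows "Sk n L mu - {(Suc r, Suc (mu r))} = Sk n L (mu(r := Suc (mu r)))"
proof
  show "Sk n L mu - {(Suc r, Suc (mu r))} \<subseteq> Sk n L (mu(r := Suc (mu r)))"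
  proof
    fix p assume p: "p \<in> Sk n L mu - {(Suc r, Suc (mu r))}"
    obtain i j where ij: "p = (i, j)" by (cases p)
    show "p \<in> Sk n L (mu(r := Suc (mu r)))"
      using p ij by (cases "i - 1 = r") (auto simp: Sk_mem)
  qed
  show "Sk n L (mu(r := Suc (mu r))) \<subseteq> Sk n L mu - {(Suc r, Suc (mu r))}"
  proof
    fix p assume p: "p \<in> Sk n L (mu(r := Suc (mu r)))"
    obtain i j where ij: "p = (i, j)" by (cases p)
    show "p \<in> Sk n L mu - {(Suc r, Suc (mu r))}"
      using p ij by (cases "i - 1 = r") (auto simp: Sk_mem)
  qed
qed

lemma valid_add:
  assumes v: "valid n L mu" and r: "r \<in> addable n L mu"
  shows "valid n L (mu(r := Suc (mu r)))"
proof -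
  have ra: "r < n" "mu r < L r" "r = 0 \<or> mu r < mu (r - 1)" using r unfolding addable_def by auto
  have md: "\<And>i. Suc i < n \<Longrightarrow> mu (Suc i) \<le> mu i" and ml: "\<And>i. i < n \<Longrightarrow> mu i \<le> L i"
    using v by (auto simp: valid_def)
  have "(mu(r := Suc (mu r))) (Suc i) \<le> (mu(r := Suc (mu r))) i" if "Suc i < n" for i
  proof (cases "Suc i = r")
    case True thus ?thesis using ra by auto
  next
    case False thus ?thesis using md[OF that] by auto
  qed
  moreover have "(mu(r := Suc (mu r))) i \<le> L i" if "i < n" for i
    using ml[OF that] ra by auto
  ultimately show ?thesis unfolding valid_def by blast
qed

lemma Sk_empty:
  assumes v: "valid n L mu" and e: "Sk n L mu = {}" and i: "i < n"
  shows "mu i = L i"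
proof (rule ccontr)
  assume "mu i \<noteq> L i"
  moreover have "mu i \<le> L i" using v i by (simp add: valid_def)
  ultimately have "mu i < L i" by simp
  hence "(Suc i, L i) \<in> Sk n L mu" using i by (simp add: Sk_mem)
  thus False using e by simp
qed

lemma gdet_cong:
  assumes "\<And>j. j < n \<Longrightarrow> mu j = nu j"
  shows "gdet a n L mu = gdet a n L nu"
proof -
  have "mat n n (\<lambda>(i,j). FP a (a (L i + n - 1 - i)) (mu j + n - 1 - j)) = mat n n (\<lambda>(i,j). FP a (a (L i + n - 1 - i)) (nu j + n - 1 - j))"
    by (rule eq_matI) (auto simp: assms)
  thus ?thesis by (simp add: gdet_def)
qed



definition Xs :: "nat \<Rightarrow> (int \<Rightarrow> 'a::comm_ring_1) \<Rightarrow> int \<Rightarrow> 'a" where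
  "Xs n x p = (\<Sum>t\<in>{- int n..p}. x t)"

definition aX :: "nat \<Rightarrow> (int \<Rightarrow> 'a::comm_ring_1) \<Rightarrow> nat \<Rightarrow> 'a" where
  "aX n x m = Xs n x (int m - int n)"

lemma Xs_diff:
  assumes "- int n - 1 \<le> p" "p \<le> q"
  shows "Xs n x q - Xs n x p = (\<Sum>t\<in>{p<..q}. x t)"
proof -
  have "{- int n..q} = {- int n..p} \<union> {p<..q}" using assms by auto
  moreover have "{- int n..p} \<inter> {p<..q} = {}" by auto
  ultimately have "Xs n x q = Xs n x p + (\<Sum>t\<in>{p<..q}. x t)"
    unfolding Xs_def by (simp add: sum.union_disjoint)
  thus ?thesis by simp
qed

lemma row_sum:
  fixes x :: "int \<Rightarrow> 'a::comm_ring_1"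
  assumes "u \<le> v"
  shows "(\<Sum>c\<in>{u<..v}. x (int c - s)) = (\<Sum>t\<in>{int u - s<..int v - s}. x t)"
proof (rule sum.reindex_bij_betw)
  show "bij_betw (\<lambda>c. int c - s) {u<..v} {int u - s<..int v - s}"
  proof (rule bij_betw_imageI)
    show "inj_on (\<lambda>c. int c - s) {u<..v}" by (rule inj_onI) simp
    show "(\<lambda>c. int c - s) ` {u<..v} = {int u - s<..int v - s}"
    proof
      show "(\<lambda>c. int c - s) ` {u<..v} \<subseteq> {int u - s<..int v - s}" by auto
      show "{int u - s<..int v - s} \<subseteq> (\<lambda>c. int c - s) ` {u<..v}"
      proof
        fix t assume t: "t \<in> {int u - s<..int v - s}"
        hence "nat (t + s) \<in> {u<..v}" "t = int (nat (t + s)) - s" by auto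
        thus "t \<in> (\<lambda>c. int c - s) ` {u<..v}" by (rule rev_image_eqI)
      qed
    qed
  qed
qed

lemma aX_e:
  assumes "r < n"
  shows "aX n x (m + n - 1 - r) = Xs n x (int m - int r - 1)"
proof -
  have "int (m + n - 1 - r) - int n = int m - int r - 1" using assms by (simp add: of_nat_diff)
  thus ?thesis unfolding aX_def by (simp only:)
qed

lemma sigma_Sk:
  fixes x :: "int \<Rightarrow> 'a::comm_ring_1"
  assumes v: "valid n L mu"
  shows "(\<Sum>p\<in>Sk n L mu. x (content p)) = (\<Sum>i<n. aX n x (L i + n - 1 - i)) - (\<Sum>j<n. aX n x (mu j + n - 1 - j))"
proof -
  have inj: "inj_on (\<lambda>(r, c). (Suc r, c)) (SIGMA r:{..<n}. {mu r<..L r})" by (rule inj_onI) auto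
  have "(\<Sum>p\<in>Sk n L mu. x (content p)) = (\<Sum>u\<in>(SIGMA r:{..<n}. {mu r<..L r}). x (content ((\<lambda>(r, c). (Suc r, c)) u)))"
    unfolding Sk_img by (rule sum.reindex[OF inj, unfolded comp_def])
  also have "\<dots> = (\<Sum>(r,c)\<in>(SIGMA r:{..<n}. {mu r<..L r}). x (int c - int (Suc r)))"
    by (rule sum.cong) (auto simp: Defs.content_def)
  also have "\<dots> = (\<Sum>r<n. \<Sum>c\<in>{mu r<..L r}. x (int c - int (Suc r)))"
    by (rule sum.Sigma[symmetric]) auto
  also have "\<dots> = (\<Sum>r<n. aX n x (L r + n - 1 - r) - aX n x (mu r + n - 1 - r))"
  proof (rule sum.cong[OF refl])
    fix r assume r: "r \<in> {..<n}"
    have ml: "mu r \<le> L r" using v r by (simp add: valid_def)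
    have "(\<Sum>c\<in>{mu r<..L r}. x (int c - int (Suc r))) = (\<Sum>t\<in>{int (mu r) - int (Suc r)<..int (L r) - int (Suc r)}. x t)"
      by (rule row_sum[OF ml])
    also have "\<dots> = Xs n x (int (L r) - int r - 1) - Xs n x (int (mu r) - int r - 1)"
    proof -
      have e1: "int (mu r) - int (Suc r) = int (mu r) - int r - 1" and e2: "int (L r) - int (Suc r) = int (L r) - int r - 1" by simp_all
      show ?thesis unfolding e1 e2 by (rule Xs_diff[symmetric]) (use r ml in auto)
    qed
    also have "\<dots> = aX n x (L r + n - 1 - r) - aX n x (mu r + n - 1 - r)"
      using aX_e[of r n x "L r"] aX_e[of r n x "mu r"] r by simp
    finally show "(\<Sum>c\<in>{mu r<..L r}. x (int c - int (Suc r))) = aX n x (L r + n - 1 - r) - aX n x (mu r + n - 1 - r)" .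
  qed
  also have "\<dots> = (\<Sum>i<n. aX n x (L i + n - 1 - i)) - (\<Sum>j<n. aX n x (mu j + n - 1 - j))"
    by (simp add: sum_subtractf)
  finally show ?thesis .
qed

lemma core_ind:
  fixes x :: "int \<Rightarrow> 'a::field"
  assumes Ld: "\<And>i. Suc i < n \<Longrightarrow> L (Suc i) \<le> L i"
    and nz: "\<And>mu. valid n L mu \<Longrightarrow> Sk n L mu \<noteq> {} \<Longrightarrow> (\<Sum>p\<in>Sk n L mu. x (content p)) \<noteq> 0"
  shows "valid n L mu \<Longrightarrow> Phi (Sk n L mu) x * gdet (aX n x) n L L = gdet (aX n x) n L mu"
proof (induction "card (Sk n L mu)" arbitrary: mu)
  case 0
  hence "Sk n L mu = {}" using Sk_finite by simp
  hence "\<And>j. j < n \<Longrightarrow> mu j = L j" using Sk_empty[OF "0.prems"] by blast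
  hence "gdet (aX n x) n L mu = gdet (aX n x) n L L" by (rule gdet_cong)
  thus ?case using \<open>Sk n L mu = {}\<close> by (simp add: Phi_empty)
next
  case (Suc d)
  let ?S = "Sk n L mu"
  let ?g = "gdet (aX n x) n L"
  have v: "valid n L mu" by (rule Suc.prems)
  have md: "\<And>i. Suc i < n \<Longrightarrow> mu (Suc i) \<le> mu i" and ml: "\<And>i. i < n \<Longrightarrow> mu i \<le> L i"
    using v by (auto simp: valid_def)
  have ne: "?S \<noteq> {}" using Suc.hyps(2) by auto
  define \<sigma> where "\<sigma> = (\<Sum>p\<in>?S. x (content p))"
  have snz: "\<sigma> \<noteq> 0" unfolding \<sigma>_def by (rule nz[OF v ne])
  have inj: "inj_on (\<lambda>r. (Suc r, Suc (mu r))) (addable n L mu)" by (rule inj_onI) auto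
  have step: "Phi (Sk n L (mu(r := Suc (mu r)))) x * ?g L = ?g (mu(r := Suc (mu r)))" if r: "r \<in> addable n L mu" for r
  proof (rule Suc.hyps(1))
    have bS: "(Suc r, Suc (mu r)) \<in> ?S" using amin_Sk[OF Ld v] r by (auto simp: amin_def)
    have "card (?S - {(Suc r, Suc (mu r))}) = d"
      using Suc.hyps(2) bS Sk_finite by (simp add: card_Diff_singleton)
    thus "d = card (Sk n L (mu(r := Suc (mu r))))" using Sk_remove[OF r] by simp
    show "valid n L (mu(r := Suc (mu r)))" by (rule valid_add[OF v r])
  qed
  have "Phi ?S x = (1 / \<sigma>) * (\<Sum>b\<in>amin ?S. Phi (?S - {b}) x)"
    unfolding \<sigma>_def by (rule Phi_rec[OF Sk_finite ne])
  also have "(\<Sum>b\<in>amin ?S. Phi (?S - {b}) x) = (\<Sum>b\<in>(\<lambda>r. (Suc r, Suc (mu r))) ` addable n L mu. Phi (?S - {b}) x)"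
    by (simp only: amin_Sk[OF Ld v])
  also have "\<dots> = (\<Sum>r\<in>addable n L mu. Phi (?S - {(Suc r, Suc (mu r))}) x)"
    by (simp add: sum.reindex[OF inj])
  also have "\<dots> = (\<Sum>r\<in>addable n L mu. Phi (Sk n L (mu(r := Suc (mu r)))) x)"
    by (rule sum.cong[OF refl]) (simp add: Sk_remove)
  finally have "Phi ?S x * ?g L = (1 / \<sigma>) * (\<Sum>r\<in>addable n L mu. Phi (Sk n L (mu(r := Suc (mu r)))) x * ?g L)"
    by (simp add: sum_distrib_right)
  also have "\<dots> = (1 / \<sigma>) * (\<Sum>r\<in>addable n L mu. ?g (mu(r := Suc (mu r))))"
    by (simp add: step)
  also have "(\<Sum>r\<in>addable n L mu. ?g (mu(r := Suc (mu r)))) = \<sigma> * ?g mu"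
    unfolding \<sigma>_def sigma_Sk[OF v] by (rule pieri[where n=n and L=L and mu=mu, OF Ld md ml, symmetric])
  finally show ?case using snz by simp
qed


definition cj :: "nat \<Rightarrow> (nat \<Rightarrow> nat) \<Rightarrow> nat \<Rightarrow> nat" where
  "cj n L j = card {r. r < n \<and> j \<le> L r}"

lemma downclosed_eq:
  fixes A :: "nat set"
  assumes f: "finite A" and d: "\<And>r r'. r \<in> A \<Longrightarrow> r' \<le> r \<Longrightarrow> r' \<in> A"
  shows "A = {..<card A}"
proof -
  have "r < card A" if r: "r \<in> A" for r
  proof -
    have "{..r} \<subseteq> A" using d r by auto
    hence "card {..r} \<le> card A" by (rule card_mono[OF f])
    thus ?thesis by simp
  qed
  hence "A \<subseteq> {..<card A}" by auto
  moreover have "card A = card {..<card A}" by simp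
  ultimately show ?thesis using card_subset_eq by (metis finite_lessThan)
qed

lemma cj_iff:
  assumes Ld: "\<And>i. Suc i < n \<Longrightarrow> L (Suc i) \<le> L i" and r: "r < n"
  shows "j \<le> L r \<longleftrightarrow> r < cj n L j"
proof -
  let ?A = "{r. r < n \<and> j \<le> L r}"
  have "?A = {..<card ?A}"
  proof (rule downclosed_eq)
    show "finite ?A" by auto
    fix r r' assume "r \<in> ?A" "r' \<le> r"
    thus "r' \<in> ?A" using mono_cons[of n L r' r, OF Ld] by auto
  qed
  hence "r \<in> ?A \<longleftrightarrow> r < cj n L j" unfolding cj_def by (metis lessThan_iff)
  thus ?thesis using r by simp
qed

lemma cj_le: "cj n L j \<le> n"
proof -
  have "{r. r < n \<and> j \<le> L r} \<subseteq> {..<n}" by auto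
  hence "card {r. r < n \<and> j \<le> L r} \<le> card {..<n}" by (intro card_mono) auto
  thus ?thesis by (simp add: cj_def)
qed

lemma cj_mono: "j1 \<le> j2 \<Longrightarrow> cj n L j2 \<le> cj n L j1"
  unfolding cj_def by (intro card_mono) auto

lemma boxes_Sk: "boxes lam = Sk (length lam) (\<lambda>i. lam ! i) (\<lambda>_. 0)"
  unfolding boxes_def Sk_def by auto

lemma hook_mem:
  assumes Ld: "\<And>i. Suc i < length lam \<Longrightarrow> lam ! (Suc i) \<le> lam ! i"
    and i: "i < length lam" and j: "1 \<le> j" "j \<le> lam ! i"
  shows "(a, b) \<in> hook lam (Suc i) j \<longleftrightarrow>
     (a = Suc i \<and> j \<le> b \<and> b \<le> lam ! i) \<or> (b = j \<and> Suc i \<le> a \<and> a \<le> cj (length lam) (\<lambda>r. lam ! r) j)"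
proof -
  let ?n = "length lam" and ?L = "\<lambda>r. lam ! r"
  have c: "\<And>r. r < ?n \<Longrightarrow> j \<le> ?L r \<longleftrightarrow> r < cj ?n ?L j" by (rule cj_iff[where n="length lam" and L="\<lambda>r. lam ! r", OF Ld])
  have cn: "cj ?n ?L j \<le> ?n" by (rule cj_le)
  show ?thesis
  proof
    assume "(a, b) \<in> hook lam (Suc i) j"
    hence h: "1 \<le> a" "a \<le> ?n" "1 \<le> b" "b \<le> lam ! (a - 1)" "(a = Suc i \<and> j \<le> b) \<or> (b = j \<and> Suc i \<le> a)"
      unfolding hook_def boxes_def by auto
    show "(a = Suc i \<and> j \<le> b \<and> b \<le> lam ! i) \<or> (b = j \<and> Suc i \<le> a \<and> a \<le> cj ?n ?L j)"
    proof (cases "a = Suc i \<and> j \<le> b")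
      case True thus ?thesis using h by auto
    next
      case False
      hence "b = j" "Suc i \<le> a" using h by auto
      moreover have "a - 1 < cj ?n ?L j" using c[of "a - 1"] h \<open>b = j\<close> by auto
      ultimately show ?thesis by auto
    qed
  next
    assume "(a = Suc i \<and> j \<le> b \<and> b \<le> lam ! i) \<or> (b = j \<and> Suc i \<le> a \<and> a \<le> cj ?n ?L j)"
    thus "(a, b) \<in> hook lam (Suc i) j"
    proof
      assume "a = Suc i \<and> j \<le> b \<and> b \<le> lam ! i"
      thus ?thesis using i j unfolding hook_def boxes_def by auto
    next
      assume a: "b = j \<and> Suc i \<le> a \<and> a \<le> cj ?n ?L j"
      hence "a - 1 < cj ?n ?L j" "a - 1 < ?n" using cn by auto
      hence "j \<le> lam ! (a - 1)" using c[of "a - 1"] by auto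
      thus ?thesis using a cn j unfolding hook_def boxes_def by auto
    qed
  qed
qed


lemma hook_sum:
  fixes x :: "int \<Rightarrow> 'a::field"
  assumes Ld: "\<And>i. Suc i < length lam \<Longrightarrow> lam ! (Suc i) \<le> lam ! i"
    and i: "i < length lam" and j: "1 \<le> j" "j \<le> lam ! i"
  shows "hook_x lam (Suc i) j x = Xs (length lam) x (int (lam ! i) - int i - 1) - Xs (length lam) x (int j - int (cj (length lam) (\<lambda>r. lam ! r) j) - 1)"
proof -
  let ?n = "length lam" and ?L = "\<lambda>r. lam ! r"
  define c where "c = cj ?n ?L j"
  define H where "H = hook lam (Suc i) j"
  have hm: "\<And>a b. (a, b) \<in> H \<longleftrightarrow> (a = Suc i \<and> j \<le> b \<and> b \<le> lam ! i) \<or> (b = j \<and> Suc i \<le> a \<and> a \<le> c)"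
    unfolding H_def c_def by (rule hook_mem[OF Ld i j])
  have ic: "i < c" unfolding c_def using cj_iff[where n="?n" and L="?L", OF Ld i] j by simp
  have cn: "c \<le> ?n" unfolding c_def by (rule cj_le)
  have ct: "\<And>a b. content (a, b) = int b - int a" by (simp add: Defs.content_def)
  have bij: "bij_betw content H {int j - int c - 1<..int (lam ! i) - int i - 1}"
  proof (rule bij_betw_imageI)
    show "inj_on content H"
    proof (rule inj_onI)
      fix p q assume p: "p \<in> H" and q: "q \<in> H" and e: "content p = content q"
      obtain a1 b1 where p1: "p = (a1, b1)" by (cases p)
      obtain a2 b2 where q1: "q = (a2, b2)" by (cases q)
      have e': "int b1 - int a1 = int b2 - int a2" using e p1 q1 ct by simp
      have h1: "(a1 = Suc i \<and> j \<le> b1 \<and> b1 \<le> lam ! i) \<or> (b1 = j \<and> Suc i \<le> a1 \<and> a1 \<le> c)" using p p1 hm by simp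
      have h2: "(a2 = Suc i \<and> j \<le> b2 \<and> b2 \<le> lam ! i) \<or> (b2 = j \<and> Suc i \<le> a2 \<and> a2 \<le> c)" using q q1 hm by simp
      from h1 h2 e' have "a1 = a2 \<and> b1 = b2" by auto
      thus "p = q" using p1 q1 by simp
    qed
    show "content ` H = {int j - int c - 1<..int (lam ! i) - int i - 1}"
    proof
      show "content ` H \<subseteq> {int j - int c - 1<..int (lam ! i) - int i - 1}"
      proof
        fix t assume "t \<in> content ` H"
        then obtain a b where ab: "(a, b) \<in> H" "t = int b - int a" using ct by force
        have "(a = Suc i \<and> j \<le> b \<and> b \<le> lam ! i) \<or> (b = j \<and> Suc i \<le> a \<and> a \<le> c)" using ab hm by simp
        thus "t \<in> {int j - int c - 1<..int (lam ! i) - int i - 1}" using ab ic j by auto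
      qed
      show "{int j - int c - 1<..int (lam ! i) - int i - 1} \<subseteq> content ` H"
      proof
        fix t assume t: "t \<in> {int j - int c - 1<..int (lam ! i) - int i - 1}"
        show "t \<in> content ` H"
        proof (cases "t \<ge> int j - int i - 1")
          case True
          define b where "b = nat (t + int i + 1)"
          have bb: "int b = t + int i + 1" using True j unfolding b_def by simp
          have "(Suc i, b) \<in> H" using hm bb True t by auto
          moreover have "content (Suc i, b) = t" using ct bb by simp
          ultimately show ?thesis by (metis image_eqI)
        next
          case False
          define a where "a = nat (int j - t)"
          have aa: "int a = int j - t" using False unfolding a_def by simp
          have "(a, j) \<in> H" using hm aa False t by auto
          moreover have "content (a, j) = t" using ct aa by simp
          ultimately show ?thesis by (metis image_eqI)
        qed
      qed
    qed
  qed
  have "hook_x lam (Suc i) j x = (\<Sum>b\<in>H. x (content b))" unfolding hook_x_def H_def ..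
  also have "\<dots> = (\<Sum>t\<in>{int j - int c - 1<..int (lam ! i) - int i - 1}. x t)"
    by (rule sum.reindex_bij_betw[OF bij])
  also have "\<dots> = Xs ?n x (int (lam ! i) - int i - 1) - Xs ?n x (int j - int c - 1)"
    by (rule Xs_diff[symmetric]) (use cn ic j in auto)
  finally show ?thesis unfolding c_def .
qed


lemma macd:
  fixes g :: "int \<Rightarrow> 'a::comm_ring_1"
  assumes Ld: "\<And>i. Suc i < n \<Longrightarrow> L (Suc i) \<le> L i" and i: "i < n"
  shows "(\<Prod>p\<in>{- int n..<int (L i) - int i - 1}. g p) =
    (\<Prod>k\<in>{i<..<n}. g (int (L k) - int k - 1)) * (\<Prod>j\<in>{1..L i}. g (int j - int (cj n L j) - 1))"
proof -
  define be where "be k = int (L k) - int k - 1" for k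
  define ga where "ga j = int j - int (cj n L j) - 1" for j
  define A where "A = be ` {i<..<n}"
  define B where "B = ga ` {1..L i}"
  define I where "I = {- int n..<int (L i) - int i - 1}"
  have c: "\<And>r j. r < n \<Longrightarrow> j \<le> L r \<longleftrightarrow> r < cj n L j" by (rule cj_iff[where n=n and L=L, OF Ld])
  have Lm: "\<And>k1 k2. k1 \<le> k2 \<Longrightarrow> k2 < n \<Longrightarrow> L k2 \<le> L k1" using mono_cons[of n L, OF Ld] by blast
  have injA: "inj_on be {i<..<n}"
  proof (rule inj_onI)
    fix k1 k2 assume k: "k1 \<in> {i<..<n}" "k2 \<in> {i<..<n}" "be k1 = be k2"
    show "k1 = k2"
    proof (rule ccontr)
      assume "k1 \<noteq> k2"
      hence "k1 < k2 \<or> k2 < k1" by auto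
      thus False
      proof
        assume "k1 < k2" hence "L k2 \<le> L k1" using Lm k by simp
        thus False using k \<open>k1 < k2\<close> unfolding be_def by simp
      next
        assume "k2 < k1" hence "L k1 \<le> L k2" using Lm k by simp
        thus False using k \<open>k2 < k1\<close> unfolding be_def by simp
      qed
    qed
  qed
  have injB: "inj_on ga {1..L i}"
  proof (rule inj_onI)
    fix j1 j2 assume j: "j1 \<in> {1..L i}" "j2 \<in> {1..L i}" "ga j1 = ga j2"
    show "j1 = j2"
    proof (rule ccontr)
      assume "j1 \<noteq> j2"
      hence "j1 < j2 \<or> j2 < j1" by auto
      thus False
      proof
        assume "j1 < j2" hence "cj n L j2 \<le> cj n L j1" by (intro cj_mono) simp
        thus False using j \<open>j1 < j2\<close> unfolding ga_def by simp
      next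
        assume "j2 < j1" hence "cj n L j1 \<le> cj n L j2" by (intro cj_mono) simp
        thus False using j \<open>j2 < j1\<close> unfolding ga_def by simp
      qed
    qed
  qed
  have AI: "A \<subseteq> I"
  proof
    fix p assume "p \<in> A"
    then obtain k where k: "k \<in> {i<..<n}" "p = be k" unfolding A_def by blast
    have "L k \<le> L i" using Lm k by simp
    thus "p \<in> I" using k unfolding I_def be_def by auto
  qed
  have BI: "B \<subseteq> I"
  proof
    fix p assume "p \<in> B"
    then obtain j where j: "j \<in> {1..L i}" "p = ga j" unfolding B_def by blast
    have "i < cj n L j" using c[OF i, of j] j by simp
    moreover have "cj n L j \<le> n" by (rule cj_le)
    ultimately show "p \<in> I" using j unfolding I_def ga_def by auto
  qed
  have disj: "A \<inter> B = {}"
  proof (rule ccontr)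
    assume "A \<inter> B \<noteq> {}"
    then obtain k j where k: "k \<in> {i<..<n}" and j: "j \<in> {1..L i}" and e: "be k = ga j"
      unfolding A_def B_def by blast
    have kn: "k < n" using k by simp
    show False
    proof (cases "j \<le> L k")
      case True
      hence "k < cj n L j" using c[OF kn] by simp
      thus False using e True unfolding be_def ga_def by simp
    next
      case False
      hence "cj n L j \<le> k" using c[OF kn, of j] by simp
      thus False using e False unfolding be_def ga_def by simp
    qed
  qed
  have cA: "card A = n - 1 - i" unfolding A_def using card_image[OF injA] by simp
  have cB: "card B = L i" unfolding B_def using card_image[OF injB] by simp
  have cI: "card I = L i + n - 1 - i" unfolding I_def using i by simp
  have fI: "finite I" unfolding I_def by simp
  have "card (A \<union> B) = card I"
  proof -
    have "finite A" "finite B" using AI BI fI finite_subset by auto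
    hence "card (A \<union> B) = card A + card B" using disj by (simp add: card_Un_disjoint)
    thus ?thesis using cA cB cI i by simp
  qed
  hence AB: "A \<union> B = I" using AI BI fI by (metis Un_subset_iff card_subset_eq)
  have "(\<Prod>p\<in>I. g p) = (\<Prod>p\<in>A. g p) * (\<Prod>p\<in>B. g p)"
  proof -
    have "finite A" "finite B" using AI BI fI finite_subset by auto
    thus ?thesis using prod.union_disjoint[of A B g] disj AB by simp
  qed
  also have "(\<Prod>p\<in>A. g p) = (\<Prod>k\<in>{i<..<n}. g (be k))"
    unfolding A_def by (rule prod.reindex[OF injA, unfolded comp_def])
  also have "(\<Prod>p\<in>B. g p) = (\<Prod>j\<in>{1..L i}. g (ga j))"
    unfolding B_def by (rule prod.reindex[OF injB, unfolded comp_def])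
  finally show ?thesis unfolding I_def be_def ga_def .
qed

lemma FP_aX:
  assumes i: "i < n"
  shows "FP (aX n x) y (m + n - 1 - i) = (\<Prod>p\<in>{- int n..<int m - int i - 1}. y - Xs n x p)"
proof -
  have "FP (aX n x) y (m + n - 1 - i) = (\<Prod>u<m + n - 1 - i. y - Xs n x (int u - int n))"
    by (simp add: FP_def aX_def)
  also have "\<dots> = (\<Prod>p\<in>{- int n..<int m - int i - 1}. y - Xs n x p)"
  proof (rule prod.reindex_bij_betw)
    show "bij_betw (\<lambda>u. int u - int n) {..<m + n - 1 - i} {- int n..<int m - int i - 1}"
    proof (rule bij_betw_imageI)
      show "inj_on (\<lambda>u. int u - int n) {..<m + n - 1 - i}" by (rule inj_onI) simp
      show "(\<lambda>u. int u - int n) ` {..<m + n - 1 - i} = {- int n..<int m - int i - 1}"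
      proof
        show "(\<lambda>u. int u - int n) ` {..<m + n - 1 - i} \<subseteq> {- int n..<int m - int i - 1}"
          using i by auto
        show "{- int n..<int m - int i - 1} \<subseteq> (\<lambda>u. int u - int n) ` {..<m + n - 1 - i}"
        proof
          fix t assume t: "t \<in> {- int n..<int m - int i - 1}"
          hence "nat (t + int n) \<in> {..<m + n - 1 - i}" "t = int (nat (t + int n)) - int n" using i by auto
          thus "t \<in> (\<lambda>u. int u - int n) ` {..<m + n - 1 - i}" by (rule rev_image_eqI)
        qed
      qed
    qed
  qed
  finally show ?thesis .
qed


lemma gtop_hooks:
  fixes x :: "int \<Rightarrow> 'a::field"
  assumes Ld: "\<And>i. Suc i < length lam \<Longrightarrow> lam ! (Suc i) \<le> lam ! i"
  shows "gdet (aX (length lam) x) (length lam) (\<lambda>r. lam ! r) (\<lambda>r. lam ! r) =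
    (\<Prod>i<length lam. \<Prod>k\<in>{i<..<length lam}. (aX (length lam) x (lam ! i + length lam - 1 - i) - aX (length lam) x (lam ! k + length lam - 1 - k)))
    * (\<Prod>(i, j)\<in>boxes lam. hook_x lam i j x)"
proof -
  let ?n = "length lam" and ?L = "\<lambda>r. lam ! r"
  let ?Y = "\<lambda>i. aX ?n x (lam ! i + ?n - 1 - i)"
  have Y: "\<And>i. i < ?n \<Longrightarrow> ?Y i = Xs ?n x (int (lam ! i) - int i - 1)" by (rule aX_e)
  have row: "FP (aX ?n x) (?Y i) (lam ! i + ?n - 1 - i) =
     (\<Prod>k\<in>{i<..<?n}. (?Y i - ?Y k)) * (\<Prod>j\<in>{1..lam ! i}. hook_x lam (Suc i) j x)" if i: "i < ?n" for i
  proof -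
    have "FP (aX ?n x) (?Y i) (lam ! i + ?n - 1 - i) = (\<Prod>p\<in>{- int ?n..<int (lam ! i) - int i - 1}. ?Y i - Xs ?n x p)"
      by (rule FP_aX[OF i])
    also have "\<dots> = (\<Prod>k\<in>{i<..<?n}. ?Y i - Xs ?n x (int (lam ! k) - int k - 1)) *
        (\<Prod>j\<in>{1..lam ! i}. ?Y i - Xs ?n x (int j - int (cj ?n ?L j) - 1))"
      by (rule macd[where n="?n" and L="?L", OF Ld i])
    also have "(\<Prod>k\<in>{i<..<?n}. ?Y i - Xs ?n x (int (lam ! k) - int k - 1)) = (\<Prod>k\<in>{i<..<?n}. (?Y i - ?Y k))"
    proof (rule prod.cong[OF refl])
      fix k assume "k \<in> {i<..<?n}"
      hence kn: "k < ?n" by simp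
      show "?Y i - Xs ?n x (int (lam ! k) - int k - 1) = ?Y i - ?Y k" by (simp only: Y[OF kn])
    qed
    also have "(\<Prod>j\<in>{1..lam ! i}. ?Y i - Xs ?n x (int j - int (cj ?n ?L j) - 1)) = (\<Prod>j\<in>{1..lam ! i}. hook_x lam (Suc i) j x)"
    proof (rule prod.cong[OF refl])
      fix j assume "j \<in> {1..lam ! i}"
      hence j1: "1 \<le> j" and j2: "j \<le> lam ! i" by auto
      show "?Y i - Xs ?n x (int j - int (cj ?n ?L j) - 1) = hook_x lam (Suc i) j x"
        by (simp only: Y[OF i] hook_sum[OF Ld i j1 j2])
    qed
    finally show ?thesis .
  qed
  have boxes_prod: "(\<Prod>(i, j)\<in>boxes lam. hook_x lam i j x) = (\<Prod>i<?n. \<Prod>j\<in>{1..lam ! i}. hook_x lam (Suc i) j x)"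
  proof -
    have inj: "inj_on (\<lambda>(r, c). (Suc r, c)) (SIGMA r:{..<?n}. {0<..lam ! r})" by (rule inj_onI) auto
    have "(\<Prod>(i, j)\<in>boxes lam. hook_x lam i j x) = (\<Prod>u\<in>(SIGMA r:{..<?n}. {0<..lam ! r}). (\<lambda>(i, j). hook_x lam i j x) ((\<lambda>(r, c). (Suc r, c)) u))"
      unfolding boxes_Sk Sk_img by (rule prod.reindex[OF inj, unfolded comp_def])
    also have "\<dots> = (\<Prod>(r, c)\<in>(SIGMA r:{..<?n}. {0<..lam ! r}). hook_x lam (Suc r) c x)"
      by (rule prod.cong) auto
    also have "\<dots> = (\<Prod>r<?n. \<Prod>c\<in>{0<..lam ! r}. hook_x lam (Suc r) c x)"
      by (rule prod.Sigma[symmetric]) auto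
    also have "\<dots> = (\<Prod>i<?n. \<Prod>j\<in>{1..lam ! i}. hook_x lam (Suc i) j x)"
    proof -
      have "\<And>r. {0<..lam ! r} = {1..lam ! r}" by auto
      thus ?thesis by simp
    qed
    finally show ?thesis .
  qed
  have "gdet (aX ?n x) ?n ?L ?L = (\<Prod>i<?n. FP (aX ?n x) (?Y i) (lam ! i + ?n - 1 - i))"
    by (rule gdet_top[where n="?n" and L="?L", OF Ld])
  also have "\<dots> = (\<Prod>i<?n. (\<Prod>k\<in>{i<..<?n}. (?Y i - ?Y k)) * (\<Prod>j\<in>{1..lam ! i}. hook_x lam (Suc i) j x))"
  proof (rule prod.cong[OF refl])
    fix i assume "i \<in> {..<?n}"
    hence "i < ?n" by simp
    thus "FP (aX ?n x) (?Y i) (lam ! i + ?n - 1 - i) = (\<Prod>k\<in>{i<..<?n}. (?Y i - ?Y k)) * (\<Prod>j\<in>{1..lam ! i}. hook_x lam (Suc i) j x)"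
      by (rule row)
  qed
  also have "\<dots> = (\<Prod>i<?n. \<Prod>k\<in>{i<..<?n}. (?Y i - ?Y k)) * (\<Prod>(i, j)\<in>boxes lam. hook_x lam i j x)"
    by (simp add: prod.distrib boxes_prod)
  finally show ?thesis .
qed

lemma card_boxes: "card (boxes lam) = sum_list lam"
proof -
  have inj: "inj_on (\<lambda>(r, c). (Suc r, c)) (SIGMA r:{..<length lam}. {0<..lam ! r})" by (rule inj_onI) auto
  have "card (boxes lam) = card (SIGMA r:{..<length lam}. {0<..lam ! r})"
    unfolding boxes_Sk Sk_img by (rule card_image[OF inj])
  also have "\<dots> = (\<Sum>r<length lam. lam ! r)" by (simp add: card_SigmaI)
  also have "\<dots> = sum_list lam" by (simp add: sum_list_sum_nth atLeast0LessThan)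
  finally show ?thesis .
qed

lemma SYT_eq: "SYT lam = SYTs (boxes lam)"
  unfolding SYT_def SYTs_def card_boxes ..

lemma Tx_eq: "T_x lam x T = wS (boxes lam) x T"
  unfolding T_x_def wS_def card_boxes pos_def Let_def ..

theorem core:
  fixes x :: "int \<Rightarrow> 'a::field"
  assumes p: "is_partition lam N"
    and nz: "\<And>S. S \<subseteq> boxes lam \<Longrightarrow> S \<noteq> {} \<Longrightarrow> (\<Sum>p\<in>S. x (content p)) \<noteq> 0"
    and V: "(\<Prod>i<length lam. \<Prod>k\<in>{i<..<length lam}. (aX (length lam) x (lam ! i + length lam - 1 - i) - aX (length lam) x (lam ! k + length lam - 1 - k))) \<noteq> 0"
  shows "(\<Sum>T\<in>SYT lam. T_x lam x T) = (\<Prod>(i, j)\<in>boxes lam. 1 / hook_x lam i j x)"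
proof -
  let ?n = "length lam" and ?L = "\<lambda>r. lam ! r"
  let ?V = "\<Prod>i<length lam. \<Prod>k\<in>{i<..<length lam}. (aX (length lam) x (lam ! i + length lam - 1 - i) - aX (length lam) x (lam ! k + length lam - 1 - k))"
  let ?H = "\<Prod>(i, j)\<in>boxes lam. hook_x lam i j x"
  have Ld: "\<And>i. Suc i < ?n \<Longrightarrow> lam ! (Suc i) \<le> lam ! i"
    using p unfolding is_partition_def sorted_wrt_iff_nth_less by auto
  have v0: "valid ?n ?L (\<lambda>_. 0)" by (simp add: valid_def)
  have nz': "\<And>mu. valid ?n ?L mu \<Longrightarrow> Sk ?n ?L mu \<noteq> {} \<Longrightarrow> (\<Sum>p\<in>Sk ?n ?L mu. x (content p)) \<noteq> 0"
  proof -
    fix mu assume "valid ?n ?L mu" "Sk ?n ?L mu \<noteq> {}"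
    moreover have "Sk ?n ?L mu \<subseteq> boxes lam" unfolding boxes_Sk Sk_def by auto
    ultimately show "(\<Sum>p\<in>Sk ?n ?L mu. x (content p)) \<noteq> 0" using nz by blast
  qed
  have "Phi (Sk ?n ?L (\<lambda>_. 0)) x * gdet (aX ?n x) ?n ?L ?L = gdet (aX ?n x) ?n ?L (\<lambda>_. 0)"
    by (rule core_ind[where n="?n" and L="?L", OF Ld nz' v0])
  moreover have "gdet (aX ?n x) ?n ?L ?L = ?V * ?H" by (rule gtop_hooks[OF Ld])
  moreover have "gdet (aX ?n x) ?n ?L (\<lambda>_. 0) = ?V" by (rule gdet_bot)
  moreover have "Sk ?n ?L (\<lambda>_. 0) = boxes lam" by (rule boxes_Sk[symmetric])
  ultimately have "Phi (boxes lam) x * (?V * ?H) = ?V" by simp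
  hence "Phi (boxes lam) x * ?H = 1" using V by (simp add: algebra_simps)
  hence "Phi (boxes lam) x = 1 / ?H"
  proof -
    assume eq: "Phi (boxes lam) x * ?H = 1"
    hence Hnz: "?H \<noteq> 0" by auto
    show ?thesis using eq Hnz by (simp add: eq_divide_eq)
  qed
  also have "\<dots> = (\<Prod>(i, j)\<in>boxes lam. 1 / hook_x lam i j x)"
    by (simp add: prod_dividef case_prod_beta)
  finally show ?thesis unfolding Phi_def SYT_eq[symmetric] by (simp add: Tx_eq)
qed


lemma to_fract_sum: "to_fract (\<Sum>a\<in>A. f a) = (\<Sum>a\<in>A. to_fract (f a))"
  by (induction A rule: infinite_finite_induct) auto

lemma to_fract_prod: "to_fract (\<Prod>a\<in>A. f a) = (\<Prod>a\<in>A. to_fract (f a))"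
  by (induction A rule: infinite_finite_induct) auto

lemma sum_lin_nz:
  assumes "finite A" "A \<noteq> {}"
  shows "(\<Sum>a\<in>A. [:g a, 1:] :: 'a::field_char_0 poly) \<noteq> 0"
proof
  assume "(\<Sum>a\<in>A. [:g a, 1:]) = 0"
  hence "coeff (\<Sum>a\<in>A. [:g a, 1:]) 1 = 0" by simp
  hence "of_nat (card A) = (0::'a)" by (simp add: coeff_sum)
  thus False using assms by simp
qed

lemma prod_inv_cancel:
  fixes f :: "'k \<Rightarrow> 'f::field"
  assumes "\<And>k. k \<in> K \<Longrightarrow> f k \<noteq> 0"
  shows "(\<Prod>k\<in>K. f k) * (\<Prod>k\<in>K. 1 / f k) = 1"
proof -
  have "(\<Prod>k\<in>K. f k) * (\<Prod>k\<in>K. 1 / f k) = (\<Prod>k\<in>K. f k * (1 / f k))"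
    by (rule prod.distrib[symmetric])
  also have "\<dots> = (\<Prod>k\<in>K. 1)" by (rule prod.cong[OF refl]) (simp add: assms)
  finally show ?thesis by simp
qed

lemma frac_ident:
  fixes D :: "'i \<Rightarrow> nat \<Rightarrow> 'f::field" and E :: "'b \<Rightarrow> 'f"
  assumes fI: "finite I" and fK: "finite K" and fB: "finite B"
    and Dnz: "\<And>T k. T \<in> I \<Longrightarrow> k \<in> K \<Longrightarrow> D T k \<noteq> 0" and Enz: "\<And>b. b \<in> B \<Longrightarrow> E b \<noteq> 0"
  shows "(\<Sum>T\<in>I. \<Prod>k\<in>K. 1 / D T k) = (\<Prod>b\<in>B. 1 / E b) \<longleftrightarrow>
    (\<Sum>T\<in>I. (\<Prod>b\<in>B. E b) * (\<Prod>T'\<in>I - {T}. \<Prod>k\<in>K. D T' k)) = (\<Prod>T'\<in>I. \<Prod>k\<in>K. D T' k)"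
proof -
  define P where "P = (\<Prod>T'\<in>I. \<Prod>k\<in>K. D T' k)"
  define Q where "Q = (\<Prod>b\<in>B. E b)"
  have Pnz: "P \<noteq> 0" unfolding P_def using Dnz fI fK by (simp add: prod_zero_iff)
  have Qnz: "Q \<noteq> 0" unfolding Q_def using Enz fB by (simp add: prod_zero_iff)
  have r: "(\<Prod>T'\<in>I - {T}. \<Prod>k\<in>K. D T' k) = P * (\<Prod>k\<in>K. 1 / D T k)" if T: "T \<in> I" for T
  proof -
    define A where "A = (\<Prod>k\<in>K. D T k)"
    define Ai where "Ai = (\<Prod>k\<in>K. 1 / D T k)"
    define R where "R = (\<Prod>T'\<in>I - {T}. \<Prod>k\<in>K. D T' k)"
    have Peq: "P = A * R"
      unfolding P_def A_def R_def by (rule prod.remove[OF fI T])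
    have AA: "A * Ai = 1" unfolding A_def Ai_def
      by (rule prod_inv_cancel) (rule Dnz[OF T])
    have "P * Ai = R * (A * Ai)" unfolding Peq by (simp only: mult_ac)
    also have "\<dots> = R" unfolding AA by simp
    finally show ?thesis unfolding R_def Ai_def by simp
  qed
  have "(\<Sum>T\<in>I. Q * (\<Prod>T'\<in>I - {T}. \<Prod>k\<in>K. D T' k)) = (\<Sum>T\<in>I. (Q * P) * (\<Prod>k\<in>K. 1 / D T k))"
  proof (rule sum.cong[OF refl])
    fix T assume "T \<in> I"
    thus "Q * (\<Prod>T'\<in>I - {T}. \<Prod>k\<in>K. D T' k) = (Q * P) * (\<Prod>k\<in>K. 1 / D T k)"
      by (simp only: r mult.assoc)
  qed
  also have "\<dots> = Q * P * (\<Sum>T\<in>I. \<Prod>k\<in>K. 1 / D T k)" by (rule sum_distrib_left[symmetric])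
  finally have l: "(\<Sum>T\<in>I. Q * (\<Prod>T'\<in>I - {T}. \<Prod>k\<in>K. D T' k)) = Q * P * (\<Sum>T\<in>I. \<Prod>k\<in>K. 1 / D T k)" .
  have q: "Q * (\<Prod>b\<in>B. 1 / E b) = 1"
    unfolding Q_def by (rule prod_inv_cancel) (rule Enz)
  have QP: "Q * P \<noteq> 0" using Pnz Qnz by simp
  have "(\<Sum>T\<in>I. \<Prod>k\<in>K. 1 / D T k) = (\<Prod>b\<in>B. 1 / E b) \<longleftrightarrow>
      Q * P * (\<Sum>T\<in>I. \<Prod>k\<in>K. 1 / D T k) = Q * P * (\<Prod>b\<in>B. 1 / E b)"
    using QP by (subst mult_cancel_left) simp
  also have "Q * P * (\<Prod>b\<in>B. 1 / E b) = P * (Q * (\<Prod>b\<in>B. 1 / E b))" by (simp only: mult_ac)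
  also have "\<dots> = P" using q by simp
  finally have X: "(\<Sum>T\<in>I. \<Prod>k\<in>K. 1 / D T k) = (\<Prod>b\<in>B. 1 / E b) \<longleftrightarrow> Q * P * (\<Sum>T\<in>I. \<Prod>k\<in>K. 1 / D T k) = P" .
  show ?thesis unfolding Q_def[symmetric] P_def[symmetric] l by (rule X)
qed


lemma prod_nz: "(\<And>a. a \<in> A \<Longrightarrow> f a \<noteq> 0) \<Longrightarrow> prod f A \<noteq> (0::'a::field)"
  by (induction A rule: infinite_finite_induct) auto

definition ddx :: "nat list \<Rightarrow> (int \<Rightarrow> 'r::comm_ring_1) \<Rightarrow> (nat \<times> nat \<Rightarrow> nat) \<Rightarrow> nat \<Rightarrow> 'r" where
  "ddx lam y T k = (\<Sum>l=1..k. y (content (pos lam T (sum_list lam + 1 - l))))"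

definition hpx :: "nat list \<Rightarrow> (int \<Rightarrow> 'r::comm_ring_1) \<Rightarrow> nat \<times> nat \<Rightarrow> 'r" where
  "hpx lam y b = (case b of (i, j) \<Rightarrow> \<Sum>c\<in>hook lam i j. y (content c))"

lemma boxes_finite: "finite (boxes lam)"
  unfolding boxes_Sk by (rule Sk_finite)

lemma hook_sub: "hook lam i j \<subseteq> boxes lam"
  unfolding hook_def by auto

theorem theorem3p6:
  fixes lam :: "nat list" and n :: nat and x :: "int \<Rightarrow> 'a::field_char_0"
  assumes "is_partition lam n"
    and "\<And>T k. T \<in> SYT lam \<Longrightarrow> 1 \<le> k \<Longrightarrow> k \<le> n \<Longrightarrow>
           (\<Sum>l=1..k. x (content (pos lam T (n + 1 - l)))) \<noteq> 0"
    and "\<And>i j. (i, j) \<in> boxes lam \<Longrightarrow> hook_x lam i j x \<noteq> 0"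
  shows "(\<Sum>T\<in>SYT lam. T_x lam x T) = (\<Prod>(i, j)\<in>boxes lam. 1 / hook_x lam i j x)"
proof -
  note p = assms(1)
  have sl: "sum_list lam = n" using p by (simp add: is_partition_def)
  define xp :: "int \<Rightarrow> 'a poly" where "xp t = [:x t, 1:]" for t
  define xf :: "int \<Rightarrow> 'a poly fract" where "xf t = to_fract (xp t)" for t
  let ?m = "length lam"
  have Ld: "\<And>i. Suc i < ?m \<Longrightarrow> lam ! (Suc i) \<le> lam ! i"
    using p unfolding is_partition_def sorted_wrt_iff_nth_less by auto
  have fSYT: "finite (SYT lam)" unfolding SYT_eq by (rule SYTs_finite[OF boxes_finite])
  have lin_nz: "(\<Sum>a\<in>A. xf (g a)) \<noteq> 0" if "finite A" "A \<noteq> {}" for A :: "'b set" and g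
  proof -
    have "(\<Sum>a\<in>A. xf (g a)) = to_fract (\<Sum>a\<in>A. [:x (g a), 1:])"
      unfolding xf_def xp_def by (rule to_fract_sum[symmetric])
    thus ?thesis using sum_lin_nz[OF that, of "\<lambda>a. x (g a)"] by (simp only: to_fract_eq_0_iff not_False_eq_True)
  qed
  (* step 1: the identity for the generic weights *)
  have core_f: "(\<Sum>T\<in>SYT lam. T_x lam xf T) = (\<Prod>(i, j)\<in>boxes lam. 1 / hook_x lam i j xf)"
  proof (rule core[OF p])
    fix S assume "S \<subseteq> boxes lam" "S \<noteq> {}"
    moreover hence "finite S" using boxes_finite finite_subset by blast
    ultimately show "(\<Sum>p\<in>S. xf (content p)) \<noteq> 0" using lin_nz by blast
  next
    let ?Y = "\<lambda>i. aX ?m xf (lam ! i + ?m - 1 - i)"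
    have "?Y i - ?Y k \<noteq> 0" if ik: "i < ?m" "k \<in> {i<..<?m}" for i k
    proof -
      have k: "k < ?m" "i < k" using ik by auto
      have "lam ! k \<le> lam ! i" using mono_cons[of ?m "\<lambda>r. lam ! r" i k, OF Ld] k by simp
      hence lt: "int (lam ! k) - int k - 1 < int (lam ! i) - int i - 1" using k by simp
      have "?Y i - ?Y k = Xs ?m xf (int (lam ! i) - int i - 1) - Xs ?m xf (int (lam ! k) - int k - 1)"
        using aX_e[of i ?m xf "lam ! i"] aX_e[of k ?m xf "lam ! k"] k by simp
      also have "\<dots> = (\<Sum>t\<in>{int (lam ! k) - int k - 1<..int (lam ! i) - int i - 1}. xf t)"
        by (rule Xs_diff) (use k lt in auto)
      also have "\<dots> \<noteq> 0" using lin_nz[of "{int (lam ! k) - int k - 1<..int (lam ! i) - int i - 1}" "\<lambda>t. t"] lt by simp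
      finally show ?thesis .
    qed
    thus "(\<Prod>i<?m. \<Prod>k\<in>{i<..<?m}. ?Y i - ?Y k) \<noteq> 0"
      by (intro prod_nz) simp
  qed
  have Tx_f: "T_x lam xf T = (\<Prod>k\<in>{1..n}. 1 / to_fract (ddx lam xp T k))" for T
  proof -
    have "T_x lam xf T = (\<Prod>k\<in>{1..n}. 1 / ddx lam xf T k)"
      unfolding T_x_def ddx_def Let_def sl ..
    also have "\<dots> = (\<Prod>k\<in>{1..n}. 1 / to_fract (ddx lam xp T k))"
      unfolding ddx_def xf_def by (simp only: to_fract_sum)
    finally show ?thesis .
  qed
  have hk_f: "(\<Prod>(i, j)\<in>boxes lam. 1 / hook_x lam i j xf) = (\<Prod>b\<in>boxes lam. 1 / to_fract (hpx lam xp b))"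
    unfolding hook_x_def hpx_def xf_def
  proof (rule prod.cong[OF refl])
    fix b :: "nat \<times> nat"
    show "(case b of (i, j) \<Rightarrow> 1 / (\<Sum>c\<in>hook lam i j. to_fract (xp (content c)))) =
      1 / to_fract (case b of (i, j) \<Rightarrow> \<Sum>c\<in>hook lam i j. xp (content c))"
      by (cases b) (simp only: prod.case to_fract_sum)
  qed
  have dnz: "ddx lam xp T k \<noteq> 0" if "1 \<le> k" for T k
  proof -
    have "finite {1..k}" "{1..k} \<noteq> {}" using that by auto
    from sum_lin_nz[OF this, of "\<lambda>l. x (content (pos lam T (sum_list lam + 1 - l)))"]
    show ?thesis unfolding ddx_def xp_def .
  qed
  have hnz: "hpx lam xp b \<noteq> 0" if "b \<in> boxes lam" for b
  proof -
    obtain i j where b: "b = (i, j)" by (cases b)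
    have e: "hpx lam xp b = (\<Sum>c\<in>hook lam i j. [:x (content c), 1:])"
      unfolding hpx_def xp_def b by (simp only: prod.case)
    have "finite (hook lam i j)" using hook_sub boxes_finite by (rule finite_subset)
    moreover have "(i, j) \<in> hook lam i j" using that b unfolding hook_def by simp
    hence "hook lam i j \<noteq> {}" by blast
    ultimately show ?thesis unfolding e by (rule sum_lin_nz)
  qed
  have id_f: "(\<Sum>T\<in>SYT lam. \<Prod>k\<in>{1..n}. 1 / to_fract (ddx lam xp T k)) = (\<Prod>b\<in>boxes lam. 1 / to_fract (hpx lam xp b))"
    using core_f unfolding Tx_f hk_f .
  (* step 3: clear denominators *)
  have dnz_f: "to_fract (ddx lam xp T k) \<noteq> 0" if "T \<in> SYT lam" "k \<in> {1..n}" for T k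
    using dnz[of k T] that by simp
  have hnz_f: "to_fract (hpx lam xp b) \<noteq> 0" if "b \<in> boxes lam" for b
    using hnz[OF that] by simp
  have "(\<Sum>T\<in>SYT lam. (\<Prod>b\<in>boxes lam. to_fract (hpx lam xp b)) * (\<Prod>T'\<in>SYT lam - {T}. \<Prod>k\<in>{1..n}. to_fract (ddx lam xp T' k)))
      = (\<Prod>T'\<in>SYT lam. \<Prod>k\<in>{1..n}. to_fract (ddx lam xp T' k))"
  proof -
    have FI: "(\<Sum>T\<in>SYT lam. \<Prod>k\<in>{1..n}. 1 / (to_fract (ddx lam xp T k))) = (\<Prod>b\<in>boxes lam. 1 / (to_fract (hpx lam xp b))) \<longleftrightarrow>
      (\<Sum>T\<in>SYT lam. (\<Prod>b\<in>boxes lam. to_fract (hpx lam xp b)) * (\<Prod>T'\<in>SYT lam - {T}. \<Prod>k\<in>{1..n}. to_fract (ddx lam xp T' k))) = (\<Prod>T'\<in>SYT lam. \<Prod>k\<in>{1..n}. to_fract (ddx lam xp T' k))"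
    proof (rule frac_ident)
      show "finite (SYT lam)" by (rule fSYT)
      show "finite {1..n}" by simp
      show "finite (boxes lam)" by (rule boxes_finite)
      show "\<And>T k. T \<in> SYT lam \<Longrightarrow> k \<in> {1..n} \<Longrightarrow> to_fract (ddx lam xp T k) \<noteq> 0" by (rule dnz_f)
      show "\<And>b. b \<in> boxes lam \<Longrightarrow> to_fract (hpx lam xp b) \<noteq> 0" by (rule hnz_f)
    qed
    show ?thesis using FI id_f by blast
  qed
  hence "to_fract (\<Sum>T\<in>SYT lam. (\<Prod>b\<in>boxes lam. hpx lam xp b) * (\<Prod>T'\<in>SYT lam - {T}. \<Prod>k\<in>{1..n}. ddx lam xp T' k))
      = to_fract (\<Prod>T'\<in>SYT lam. \<Prod>k\<in>{1..n}. ddx lam xp T' k)"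
    by (simp only: to_fract_sum to_fract_prod to_fract_mult)
  hence id_p: "(\<Sum>T\<in>SYT lam. (\<Prod>b\<in>boxes lam. hpx lam xp b) * (\<Prod>T'\<in>SYT lam - {T}. \<Prod>k\<in>{1..n}. ddx lam xp T' k))
      = (\<Prod>T'\<in>SYT lam. \<Prod>k\<in>{1..n}. ddx lam xp T' k)"
    by (simp only: to_fract_eq_iff)
  (* step 4: evaluate at 0 *)
  have ev_d: "poly (ddx lam xp T k) 0 = ddx lam x T k" for T k
    unfolding ddx_def xp_def by (simp add: poly_sum)
  have ev_h: "poly (hpx lam xp b) 0 = hpx lam x b" for b
    unfolding hpx_def xp_def by (simp add: poly_sum split: prod.split)
  have "poly (\<Sum>T\<in>SYT lam. (\<Prod>b\<in>boxes lam. hpx lam xp b) * (\<Prod>T'\<in>SYT lam - {T}. \<Prod>k\<in>{1..n}. ddx lam xp T' k)) 0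
      = poly (\<Prod>T'\<in>SYT lam. \<Prod>k\<in>{1..n}. ddx lam xp T' k) 0"
    using id_p by (rule arg_cong)
  hence id_a: "(\<Sum>T\<in>SYT lam. (\<Prod>b\<in>boxes lam. hpx lam x b) * (\<Prod>T'\<in>SYT lam - {T}. \<Prod>k\<in>{1..n}. ddx lam x T' k))
      = (\<Prod>T'\<in>SYT lam. \<Prod>k\<in>{1..n}. ddx lam x T' k)"
    by (simp only: poly_sum poly_prod poly_mult ev_d ev_h)
  have dnz_a: "ddx lam x T k \<noteq> 0" if "T \<in> SYT lam" "k \<in> {1..n}" for T k
    using assms(2)[of T k] that unfolding ddx_def sl by auto
  have hnz_a: "hpx lam x b \<noteq> 0" if "b \<in> boxes lam" for b
    using assms(3)[of "fst b" "snd b"] that unfolding hpx_def hook_x_def by (cases b) auto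
  have "(\<Sum>T\<in>SYT lam. \<Prod>k\<in>{1..n}. 1 / ddx lam x T k) = (\<Prod>b\<in>boxes lam. 1 / hpx lam x b)"
  proof -
    have FI: "(\<Sum>T\<in>SYT lam. \<Prod>k\<in>{1..n}. 1 / (ddx lam x T k)) = (\<Prod>b\<in>boxes lam. 1 / (hpx lam x b)) \<longleftrightarrow>
      (\<Sum>T\<in>SYT lam. (\<Prod>b\<in>boxes lam. hpx lam x b) * (\<Prod>T'\<in>SYT lam - {T}. \<Prod>k\<in>{1..n}. ddx lam x T' k)) = (\<Prod>T'\<in>SYT lam. \<Prod>k\<in>{1..n}. ddx lam x T' k)"
    proof (rule frac_ident)
      show "finite (SYT lam)" by (rule fSYT)
      show "finite {1..n}" by simp
      show "finite (boxes lam)" by (rule boxes_finite)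
      show "\<And>T k. T \<in> SYT lam \<Longrightarrow> k \<in> {1..n} \<Longrightarrow> ddx lam x T k \<noteq> 0" by (rule dnz_a)
      show "\<And>b. b \<in> boxes lam \<Longrightarrow> hpx lam x b \<noteq> 0" by (rule hnz_a)
    qed
    show ?thesis using FI id_a by blast
  qed
  moreover have "\<And>T. T_x lam x T = (\<Prod>k\<in>{1..n}. 1 / ddx lam x T k)"
    unfolding T_x_def ddx_def Let_def sl ..
  moreover have "(\<Prod>(i, j)\<in>boxes lam. 1 / hook_x lam i j x) = (\<Prod>b\<in>boxes lam. 1 / hpx lam x b)"
    unfolding hook_x_def hpx_def by (rule prod.cong[OF refl]) (simp split: prod.split)
  ultimately show ?thesis by simp
qed


end
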